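(* (a) There exist graphs $G$ with $O_{R,k}(G)=\mathcal{M}$ for all positive integers $k$. (b) There exist graphs $G$ with $O_{R,k}(G)=\mathcal{N}$ for all positive integers $k$. (c) There exist graphs $G$ with $O_{R,k}(G)=\mathcal{B}$ for all positive integers $k$. (d) There exists a graph $G$ with $O_{R,1}(G)=\mathcal{N}$ and $O_{R,k}(G)=\mathcal{M}$ for all $k\ge 2$. (e) There exist graphs $G$ with $O_{R,1}(G)=\mathcal{B}$ and $O_{R,k}(G)=\mathcal{N}$ for all $k\ge2$. (f) There exist graphs $G$ with $O_{R,1}(G)=\mathcal{B}$ and $O_{R,k}(G)=\mathcal{M}$ for all $k\ge2$. (g) For every integer $\alpha\ge2$, let $G$ be the graph obtained from a path $v_1v_2\cdots v_\alpha$ as follows: for each $i\in\{1,\dots,\alpha\}$ add two leaves $\ell_i,\ell'_i$ adjacent to $v_i$, and add three vertices $s_i,s'_i,x_i$ with edges $v_is_i$, $v_is'_i$, $s_ix_i$, $s'_ix_i$; then add a vertex $y$ adjacent to all of $x_1,\dots,x_\alpha$ and a vertex $z$ adjacent only to $y$. Then $O_{R,1}(G)=\mathcal{B}$, $O_{R,2}(G)=\mathcal{N}$, and $O_{R,k}(G)=\mathcal{M}$ for all $k\ge3$. In particular, there exist graphs $G$ with $O_{R,1}(G)=\mathcal{B}$, $O_{R,2}(G)=\mathcal{N}$ and $O_{R,k}(G)=\mathcal{M}$ for $k\ge3$.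
   Context: All graphs are finite, simple, undirected and connected. $d$ is the shortest-path distance and $d_k(x,y)=\min\{d(x,y),k+1\}$ for a positive integer $k$. A set $S\subseteq V(G)$ is a distance-$k$ resolving set if for all distinct $x,y\in V(G)$ some $z\in S$ has $d_k(x,z)\ne d_k(y,z)$. In the Maker-Breaker distance-$k$ resolving game on $G$, Maker and Breaker alternately select a not-yet-chosen vertex; Maker wins if his selected vertices form a distance-$k$ resolving set, Breaker wins otherwise. $O_{R,k}(G)=\mathcal{M}$ if Maker has a winning strategy whether he moves first or second, $\mathcal{B}$ if Breaker has a winning strategy whether she moves first or second, and $\mathcal{N}$ if the first player has a winning strategy. *)

theory Defs
  imports Main
begin

definition edges :: "('a \<Rightarrow> 'a \<Rightarrow> bool) \<Rightarrow> ('a \<times> 'a) set" where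
  "edges E = {(x, y). E x y}"

definition conn_graph :: "'a set \<Rightarrow> ('a \<Rightarrow> 'a \<Rightarrow> bool) \<Rightarrow> bool" where
  "conn_graph V E \<longleftrightarrow> finite V \<and> V \<noteq> {}
     \<and> (\<forall>x y. E x y \<longrightarrow> x \<in> V \<and> y \<in> V)
     \<and> (\<forall>x y. E x y \<longrightarrow> E y x)
     \<and> (\<forall>x. \<not> E x x)
     \<and> (\<forall>x\<in>V. \<forall>y\<in>V. (x, y) \<in> (edges E)\<^sup>*)"

definition gdist :: "('a \<Rightarrow> 'a \<Rightarrow> bool) \<Rightarrow> 'a \<Rightarrow> 'a \<Rightarrow> nat" where
  "gdist E x y = (LEAST n. (x, y) \<in> (edges E) ^^ n)"

definition dk :: "('a \<Rightarrow> 'a \<Rightarrow> bool) \<Rightarrow> nat \<Rightarrow> 'a \<Rightarrow> 'a \<Rightarrow> nat" where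
  "dk E k x y = min (gdist E x y) (k + 1)"

definition resolving_k :: "'a set \<Rightarrow> ('a \<Rightarrow> 'a \<Rightarrow> bool) \<Rightarrow> nat \<Rightarrow> 'a set \<Rightarrow> bool" where
  "resolving_k V E k S \<longleftrightarrow> S \<subseteq> V \<and>
     (\<forall>x\<in>V. \<forall>y\<in>V. x \<noteq> y \<longrightarrow> (\<exists>z\<in>S. dk E k x z \<noteq> dk E k y z))"

text \<open>Positions: Maker's chosen set M, Breaker's chosen set B, and whether it is
Maker's turn.\<close>

inductive maker_wins :: "'a set \<Rightarrow> ('a \<Rightarrow> 'a \<Rightarrow> bool) \<Rightarrow> nat \<Rightarrow> 'a set \<Rightarrow> 'a set \<Rightarrow> bool \<Rightarrow> bool"
  for V E k where
  mw_end: "V - (M \<union> B) = {} \<Longrightarrow> resolving_k V E k M \<Longrightarrow> maker_wins V E k M B t"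
| mw_maker: "v \<in> V - (M \<union> B) \<Longrightarrow> maker_wins V E k (insert v M) B False
      \<Longrightarrow> maker_wins V E k M B True"
| mw_breaker: "V - (M \<union> B) \<noteq> {} \<Longrightarrow>
      (\<And>v. v \<in> V - (M \<union> B) \<Longrightarrow> maker_wins V E k M (insert v B) True)
      \<Longrightarrow> maker_wins V E k M B False"

inductive breaker_wins :: "'a set \<Rightarrow> ('a \<Rightarrow> 'a \<Rightarrow> bool) \<Rightarrow> nat \<Rightarrow> 'a set \<Rightarrow> 'a set \<Rightarrow> bool \<Rightarrow> bool"
  for V E k where
  bw_end: "V - (M \<union> B) = {} \<Longrightarrow> \<not> resolving_k V E k M \<Longrightarrow> breaker_wins V E k M B t"
| bw_breaker: "v \<in> V - (M \<union> B) \<Longrightarrow> breaker_wins V E k M (insert v B) True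
      \<Longrightarrow> breaker_wins V E k M B False"
| bw_maker: "V - (M \<union> B) \<noteq> {} \<Longrightarrow>
      (\<And>v. v \<in> V - (M \<union> B) \<Longrightarrow> breaker_wins V E k (insert v M) B False)
      \<Longrightarrow> breaker_wins V E k M B True"

datatype outcome = Outcome_M | Outcome_N | Outcome_B | Outcome_Other

text \<open>O_{R,k}(G). The last branch (second player wins) never occurs for this
game, but is kept so that the definition does not prejudge that fact.\<close>
definition O_R :: "nat \<Rightarrow> 'a set \<Rightarrow> ('a \<Rightarrow> 'a \<Rightarrow> bool) \<Rightarrow> outcome" where
  "O_R k V E =
    (if maker_wins V E k {} {} True \<and> maker_wins V E k {} {} False then Outcome_M
     else if breaker_wins V E k {} {} True \<and> breaker_wins V E k {} {} False then Outcome_B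
     else if maker_wins V E k {} {} True \<and> breaker_wins V E k {} {} False then Outcome_N
     else Outcome_Other)"

datatype gvert = Pv nat | Lv nat | Lv' nat | Sv nat | Sv' nat | Xv nat | Yv | Zv

definition gV :: "nat \<Rightarrow> gvert set" where
  "gV \<alpha> = (\<Union>i\<in>{1..\<alpha>}. {Pv i, Lv i, Lv' i, Sv i, Sv' i, Xv i}) \<union> {Yv, Zv}"

definition gE0 :: "nat \<Rightarrow> gvert \<Rightarrow> gvert \<Rightarrow> bool" where
  "gE0 \<alpha> u w \<longleftrightarrow>
     (\<exists>i. 1 \<le> i \<and> i \<le> \<alpha> \<and>
        ((u = Pv i \<and> (w = Lv i \<or> w = Lv' i \<or> w = Sv i \<or> w = Sv' i))
         \<or> ((u = Sv i \<or> u = Sv' i) \<and> w = Xv i)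
         \<or> (u = Xv i \<and> w = Yv)))
     \<or> (\<exists>i. 1 \<le> i \<and> i < \<alpha> \<and> u = Pv i \<and> w = Pv (Suc i))
     \<or> (u = Yv \<and> w = Zv)"

definition gE :: "nat \<Rightarrow> gvert \<Rightarrow> gvert \<Rightarrow> bool" where
  "gE \<alpha> u w \<longleftrightarrow> gE0 \<alpha> u w \<or> gE0 \<alpha> w u"

end

theory Submission
  imports Defs
begin


lemma excl:
  "maker_wins V E k M B t \<Longrightarrow> breaker_wins V E k M B t \<Longrightarrow> False"
proof (induction rule: maker_wins.induct)
  case (mw_end M B t)
  from mw_end.prems show ?case
    by (cases rule: breaker_wins.cases) (use mw_end.hyps in auto)
next
  case (mw_maker v M B)
  from mw_maker.prems show ?case
    by (cases rule: breaker_wins.cases) (use mw_maker.hyps mw_maker.IH in auto)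
next
  case (mw_breaker M B)
  from mw_breaker.prems show ?case
    by (cases rule: breaker_wins.cases) (use mw_breaker.hyps mw_breaker.IH in auto)
qed

lemma OR_M: "maker_wins V E k {} {} True \<Longrightarrow> maker_wins V E k {} {} False \<Longrightarrow> O_R k V E = Outcome_M"
  by (simp add: O_R_def)

lemma OR_B: "breaker_wins V E k {} {} True \<Longrightarrow> breaker_wins V E k {} {} False \<Longrightarrow> O_R k V E = Outcome_B"
  using excl by (fastforce simp add: O_R_def)

lemma OR_N: "maker_wins V E k {} {} True \<Longrightarrow> breaker_wins V E k {} {} False \<Longrightarrow> O_R k V E = Outcome_N"
  using excl by (fastforce simp add: O_R_def)

definition pairs_ok :: "'a set \<Rightarrow> 'a set set \<Rightarrow> bool" where
  "pairs_ok V P \<longleftrightarrow> (\<forall>p\<in>P. p \<subseteq> V \<and> card p = 2) \<and> (\<forall>p\<in>P. \<forall>q\<in>P. p \<noteq> q \<longrightarrow> p \<inter> q = {})"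

definition goodM :: "'a set \<Rightarrow> ('a \<Rightarrow> 'a \<Rightarrow> bool) \<Rightarrow> nat \<Rightarrow> 'a set set \<Rightarrow> 'a set \<Rightarrow> bool" where
  "goodM V E k P M0 \<longleftrightarrow> (\<forall>M'. M0 \<subseteq> M' \<and> M' \<subseteq> V \<and> (\<forall>p\<in>P. p \<inter> M' \<noteq> {}) \<longrightarrow> resolving_k V E k M')"

definition goodB :: "'a set \<Rightarrow> ('a \<Rightarrow> 'a \<Rightarrow> bool) \<Rightarrow> nat \<Rightarrow> 'a set set \<Rightarrow> 'a set \<Rightarrow> bool" where
  "goodB V E k P B0 \<longleftrightarrow> (\<forall>M'. M' \<subseteq> V - B0 \<and> (\<forall>p\<in>P. \<not> p \<subseteq> M') \<longrightarrow> \<not> resolving_k V E k M')"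

lemma card2_other: "card p = 2 \<Longrightarrow> v \<in> p \<Longrightarrow> \<exists>u\<in>p. u \<noteq> v"
  by (metis card_2_iff insert_iff)

lemma card2_ne: "card p = 2 \<Longrightarrow> p \<noteq> {}"
  by auto

lemma maker_pairing:
  assumes fin: "finite V" and po: "pairs_ok V P" and gm: "goodM V E k P M"
    and MV: "M \<subseteq> V" and safe: "\<forall>p\<in>P. p \<inter> M \<noteq> {} \<or> p \<inter> B = {}"
  shows "maker_wins V E k M B False"
  using gm MV safe
proof (induction "card (V - (M \<union> B))" arbitrary: M B rule: less_induct)
  case less
  have hits: "\<forall>p\<in>P. p \<inter> M' \<noteq> {}"
    if "\<forall>p\<in>P. p \<inter> M' \<noteq> {} \<or> p \<inter> B' = {}" "V - (M' \<union> B') = {}" for M' B'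
  proof
    fix p assume "p \<in> P"
    with po have "p \<subseteq> V" "p \<noteq> {}" by (auto simp: pairs_ok_def)
    with that \<open>p \<in> P\<close> show "p \<inter> M' \<noteq> {}" by blast
  qed
  have gmono: "goodM V E k P (insert u M)" for u
    using less.prems(1) by (auto simp: goodM_def)
  show ?case
  proof (cases "V - (M \<union> B) = {}")
    case True
    then show ?thesis
      using hits[OF less.prems(3) True] less.prems(1,2)
      by (intro mw_end) (auto simp: goodM_def)
  next
    case False
    show ?thesis
    proof (rule mw_breaker[OF False])
      fix v assume v: "v \<in> V - (M \<union> B)"
      show "maker_wins V E k M (insert v B) True"
      proof (cases "\<exists>p\<in>P. v \<in> p \<and> p \<inter> M = {}")
        case True
        then obtain p where p: "p \<in> P" "v \<in> p" "p \<inter> M = {}" by blast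
        with less.prems(3) have pB: "p \<inter> B = {}" by blast
        from po p have pV: "p \<subseteq> V" and c2: "card p = 2" by (auto simp: pairs_ok_def)
        obtain u where u: "u \<in> p" "u \<noteq> v" using card2_other[OF c2 p(2)] by blast
        have uf: "u \<in> V - (M \<union> insert v B)" using u pV p pB by blast
        have lt: "card (V - (insert u M \<union> insert v B)) < card (V - (M \<union> B))"
          by (rule psubset_card_mono) (use fin v in auto)
        have safe': "\<forall>q\<in>P. q \<inter> insert u M \<noteq> {} \<or> q \<inter> insert v B = {}"
        proof
          fix q assume q: "q \<in> P"
          show "q \<inter> insert u M \<noteq> {} \<or> q \<inter> insert v B = {}"
          proof (cases "q = p")
            case True then show ?thesis using u by blast
          next
            case False
            with po q p have "q \<inter> p = {}" by (auto simp: pairs_ok_def)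
            with p(2) less.prems(3) q show ?thesis by blast
          qed
        qed
        have "maker_wins V E k (insert u M) (insert v B) False"
          using less.hyps[OF lt gmono _ safe'] less.prems(2) uf by blast
        then show ?thesis by (rule mw_maker[OF uf])
      next
        case False
        have safe': "\<forall>q\<in>P. q \<inter> M \<noteq> {} \<or> q \<inter> insert v B = {}"
          using False less.prems(3) by blast
        show ?thesis
        proof (cases "V - (M \<union> insert v B) = {}")
          case True
          then show ?thesis
            using hits[OF safe' True] less.prems(1,2)
            by (intro mw_end) (auto simp: goodM_def)
        next
          case False
          then obtain u where uf: "u \<in> V - (M \<union> insert v B)" by blast
          have lt: "card (V - (insert u M \<union> insert v B)) < card (V - (M \<union> B))"
            by (rule psubset_card_mono) (use fin v in auto)
          have safe'': "\<forall>q\<in>P. q \<inter> insert u M \<noteq> {} \<or> q \<inter> insert v B = {}"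
            using safe' by blast
          have "maker_wins V E k (insert u M) (insert v B) False"
            using less.hyps[OF lt gmono _ safe''] less.prems(2) uf by blast
          then show ?thesis by (rule mw_maker[OF uf])
        qed
      qed
    qed
  qed
qed

lemma breaker_pairing:
  assumes fin: "finite V" and po: "pairs_ok V P" and gb: "goodB V E k P B"
    and MV: "M \<subseteq> V" and MB: "M \<inter> B = {}" and safe: "\<forall>p\<in>P. p \<inter> B \<noteq> {} \<or> p \<inter> M = {}"
  shows "breaker_wins V E k M B True"
  using gb MV MB safe
proof (induction "card (V - (M \<union> B))" arbitrary: M B rule: less_induct)
  case less
  have gmono: "goodB V E k P (insert u B)" for u
    using less.prems(1) by (auto simp: goodB_def)
  have endc: "\<not> resolving_k V E k M'"
    if "M' \<subseteq> V - B" "\<forall>p\<in>P. \<not> p \<subseteq> M'" for M'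
    using less.prems(1) that by (auto simp: goodB_def)
  show ?case
  proof (cases "V - (M \<union> B) = {}")
    case True
    have "\<forall>p\<in>P. \<not> p \<subseteq> M"
    proof (intro ballI notI)
      fix p assume p: "p \<in> P" "p \<subseteq> M"
      with po have "p \<noteq> {}" by (auto simp: pairs_ok_def)
      with p less.prems(3,4) show False by blast
    qed
    then show ?thesis using True endc[of M] less.prems(2,3)
      by (intro bw_end) auto
  next
    case False
    show ?thesis
    proof (rule bw_maker[OF False])
      fix v assume v: "v \<in> V - (M \<union> B)"
      show "breaker_wins V E k (insert v M) B False"
      proof (cases "\<exists>p\<in>P. v \<in> p \<and> p \<inter> B = {}")
        case True
        then obtain p where p: "p \<in> P" "v \<in> p" "p \<inter> B = {}" by blast
        with less.prems(4) have pM: "p \<inter> M = {}" by blast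
        from po p have pV: "p \<subseteq> V" and c2: "card p = 2" by (auto simp: pairs_ok_def)
        obtain u where u: "u \<in> p" "u \<noteq> v" using card2_other[OF c2 p(2)] by blast
        have uf: "u \<in> V - (insert v M \<union> B)" using u pV p pM by blast
        have lt: "card (V - (insert v M \<union> insert u B)) < card (V - (M \<union> B))"
          by (rule psubset_card_mono) (use fin v in auto)
        have safe': "\<forall>q\<in>P. q \<inter> insert u B \<noteq> {} \<or> q \<inter> insert v M = {}"
        proof
          fix q assume q: "q \<in> P"
          show "q \<inter> insert u B \<noteq> {} \<or> q \<inter> insert v M = {}"
          proof (cases "q = p")
            case True then show ?thesis using u by blast
          next
            case False
            with po q p have "q \<inter> p = {}" by (auto simp: pairs_ok_def)
            with p(2) less.prems(4) q show ?thesis by blast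
          qed
        qed
        have "breaker_wins V E k (insert v M) (insert u B) True"
          using less.hyps[OF lt gmono _ _ safe'] less.prems(2,3) uf v by blast
        then show ?thesis by (rule bw_breaker[OF uf])
      next
        case False
        have safe': "\<forall>q\<in>P. q \<inter> B \<noteq> {} \<or> q \<inter> insert v M = {}"
          using False less.prems(4) by blast
        show ?thesis
        proof (cases "V - (insert v M \<union> B) = {}")
          case True
          have "\<forall>p\<in>P. \<not> p \<subseteq> insert v M"
          proof (intro ballI notI)
            fix p assume p: "p \<in> P" "p \<subseteq> insert v M"
            with po have "p \<noteq> {}" by (auto simp: pairs_ok_def)
            with p safe' less.prems(3) v show False by blast
          qed
          then show ?thesis using True endc[of "insert v M"] less.prems(2,3) v
            by (intro bw_end) auto
        next
          case False
          then obtain u where uf: "u \<in> V - (insert v M \<union> B)" by blast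
          have lt: "card (V - (insert v M \<union> insert u B)) < card (V - (M \<union> B))"
            by (rule psubset_card_mono) (use fin v in auto)
          have safe'': "\<forall>q\<in>P. q \<inter> insert u B \<noteq> {} \<or> q \<inter> insert v M = {}"
            using safe' by blast
          have "breaker_wins V E k (insert v M) (insert u B) True"
            using less.hyps[OF lt gmono _ _ safe''] less.prems(2,3) uf v by blast
          then show ?thesis by (rule bw_breaker[OF uf])
        qed
      qed
    qed
  qed
qed


lemma walk_lower:
  assumes EV: "\<forall>u w. E u w \<longrightarrow> u \<in> V \<and> w \<in> V"
    and D0: "\<forall>x\<in>V. D x x = 0"
    and Lip: "\<forall>x\<in>V. \<forall>y\<in>V. E x y \<longrightarrow> (\<forall>z\<in>V. D x z \<le> D y z + 1)"
  shows "(x, z) \<in> (edges E) ^^ n \<Longrightarrow> x \<in> V \<Longrightarrow> z \<in> V \<Longrightarrow> D x z \<le> n"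
proof (induction n arbitrary: x)
  case 0
  then show ?case using D0 by simp
next
  case (Suc n)
  from relpow_Suc_D2[OF Suc.prems(1)] obtain y where y: "(x, y) \<in> edges E" "(y, z) \<in> edges E ^^ n"
    by blast
  have Exy: "E x y" using y(1) by (simp add: edges_def)
  then have yV: "y \<in> V" using EV by blast
  have "D y z \<le> n" using Suc.IH[OF y(2) yV Suc.prems(3)] .
  moreover have "D x z \<le> D y z + 1" using Lip Suc.prems(2) yV Exy Suc.prems(3) by blast
  ultimately show ?case by simp
qed

lemma dist_table:
  assumes EV: "\<forall>u w. E u w \<longrightarrow> u \<in> V \<and> w \<in> V"
    and D0: "\<forall>x\<in>V. D x x = 0"
    and Lip: "\<forall>x\<in>V. \<forall>y\<in>V. E x y \<longrightarrow> (\<forall>z\<in>V. D x z \<le> D y z + 1)"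
    and Step: "\<forall>x\<in>V. \<forall>z\<in>V. x \<noteq> z \<longrightarrow> (\<exists>y\<in>V. E x y \<and> D y z + 1 = D x z)"
  shows "\<forall>x\<in>V. \<forall>z\<in>V. (x, z) \<in> (edges E) ^^ (D x z) \<and> gdist E x z = D x z"
proof (intro ballI)
  fix x z assume xV: "x \<in> V" and zV: "z \<in> V"
  have walk: "\<forall>x\<in>V. D x z = n \<longrightarrow> (x, z) \<in> (edges E) ^^ n" for n
  proof (induction n)
    case 0
    show ?case
    proof (intro ballI impI)
      fix x assume "x \<in> V" "D x z = 0"
      then have "x = z" using Step zV by fastforce
      then show "(x, z) \<in> edges E ^^ 0" by simp
    qed
  next
    case (Suc n)
    show ?case
    proof (intro ballI impI)
      fix x assume xV: "x \<in> V" and Dx: "D x z = Suc n"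
      then have "x \<noteq> z" using D0 zV by auto
      then obtain y where y: "y \<in> V" "E x y" "D y z + 1 = D x z" using Step xV zV by blast
      then have "(y, z) \<in> edges E ^^ n" using Suc.IH Dx by auto
      moreover have "(x, y) \<in> edges E" using y by (simp add: edges_def)
      ultimately show "(x, z) \<in> edges E ^^ Suc n" using relpow_Suc_I2 by metis
    qed
  qed
  have w: "(x, z) \<in> (edges E) ^^ (D x z)" using walk xV by blast
  have "gdist E x z = D x z"
    unfolding gdist_def
  proof (rule Least_equality)
    show "(x, z) \<in> edges E ^^ D x z" by (rule w)
  next
    fix m assume "(x, z) \<in> edges E ^^ m"
    then show "D x z \<le> m" using walk_lower[OF EV D0 Lip] xV zV by blast
  qed
  with w show "(x, z) \<in> (edges E) ^^ (D x z) \<and> gdist E x z = D x z" by simp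
qed

definition EL :: "(nat \<times> nat) list \<Rightarrow> nat \<Rightarrow> nat \<Rightarrow> bool" where
  "EL es x y \<longleftrightarrow> (x, y) \<in> set es \<or> (y, x) \<in> set es"

definition DT :: "nat list list \<Rightarrow> nat \<Rightarrow> nat \<Rightarrow> nat" where
  "DT tbl x y = tbl ! x ! y"

definition resolvingDk :: "'a set \<Rightarrow> ('a \<Rightarrow> 'a \<Rightarrow> nat) \<Rightarrow> nat \<Rightarrow> 'a set \<Rightarrow> bool" where
  "resolvingDk V D k S \<longleftrightarrow> S \<subseteq> V \<and>
     (\<forall>x\<in>V. \<forall>y\<in>V. x \<noteq> y \<longrightarrow> (\<exists>z\<in>S. min (D x z) (k + 1) \<noteq> min (D y z) (k + 1)))"

fun transv :: "('a \<times> 'a) list \<Rightarrow> 'a list list" where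
  "transv [] = [[]]"
| "transv ((a, b) # ps) = map ((#) a) (transv ps) @ map ((#) b) (transv ps)"

definition pset :: "('a \<times> 'a) list \<Rightarrow> 'a set set" where
  "pset ps = (\<lambda>(a, b). {a, b}) ` set ps"

fun flat :: "('a \<times> 'a) list \<Rightarrow> 'a list" where
  "flat [] = []"
| "flat ((a, b) # ps) = a # b # flat ps"

lemma trans_hit: "(\<forall>p\<in>pset ps. p \<inter> M \<noteq> {}) \<Longrightarrow> \<exists>t\<in>set (transv ps). set t \<subseteq> M"
proof (induction ps)
  case Nil then show ?case by simp
next
  case (Cons ab ps)
  obtain a b where ab: "ab = (a, b)" by fastforce
  have "\<forall>p\<in>pset ps. p \<inter> M \<noteq> {}" using Cons.prems by (simp add: pset_def)
  then obtain t where t: "t \<in> set (transv ps)" "set t \<subseteq> M" using Cons.IH by blast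
  have "{a, b} \<inter> M \<noteq> {}" using Cons.prems ab by (simp add: pset_def)
  then have "a \<in> M \<or> b \<in> M" by blast
  then show ?case
  proof
    assume "a \<in> M" then show ?thesis using t ab by (intro bexI[of _ "a # t"]) auto
  next
    assume "b \<in> M" then show ?thesis using t ab by (intro bexI[of _ "b # t"]) auto
  qed
qed

lemma trans_avoid: "(\<forall>p\<in>pset ps. \<not> p \<subseteq> M) \<Longrightarrow> \<exists>t\<in>set (transv ps). set t \<inter> M = {}"
proof (induction ps)
  case Nil then show ?case by simp
next
  case (Cons ab ps)
  obtain a b where ab: "ab = (a, b)" by fastforce
  have "\<forall>p\<in>pset ps. \<not> p \<subseteq> M" using Cons.prems by (simp add: pset_def)
  then obtain t where t: "t \<in> set (transv ps)" "set t \<inter> M = {}" using Cons.IH by blast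
  have "\<not> {a, b} \<subseteq> M" using Cons.prems ab by (simp add: pset_def)
  then have "a \<notin> M \<or> b \<notin> M" by blast
  then show ?case
  proof
    assume "a \<notin> M" then show ?thesis using t ab by (intro bexI[of _ "a # t"]) auto
  next
    assume "b \<notin> M" then show ?thesis using t ab by (intro bexI[of _ "b # t"]) auto
  qed
qed

lemma resolving_mono: "resolving_k V E k S \<Longrightarrow> S \<subseteq> S' \<Longrightarrow> S' \<subseteq> V \<Longrightarrow> resolving_k V E k S'"
  unfolding resolving_k_def by blast

lemma dk_min: "k \<le> k' \<Longrightarrow> dk E k x z = min (dk E k' x z) (k + 1)"
  unfolding dk_def by (simp add: min.assoc)
lemma resolving_mono_k:
  assumes r: "resolving_k V E k S" and kk: "k \<le> k'" shows "resolving_k V E k' S"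
  unfolding resolving_k_def
proof (intro conjI ballI impI)
  show "S \<subseteq> V" using r by (simp add: resolving_k_def)
next
  fix x y assume "x \<in> V" "y \<in> V" "x \<noteq> y"
  then obtain z where zS: "z \<in> S" and nz: "dk E k x z \<noteq> dk E k y z" using r unfolding resolving_k_def by blast
  have e1: "dk E k x z = min (dk E k' x z) (k + 1)" by (rule dk_min[OF kk])
  have e2: "dk E k y z = min (dk E k' y z) (k + 1)" by (rule dk_min[OF kk])
  have "dk E k' x z \<noteq> dk E k' y z"
  proof
    assume h: "dk E k' x z = dk E k' y z"
    have "dk E k x z = dk E k y z" by (simp only: e1 e2 h)
    with nz show False by contradiction
  qed
  with zS show "\<exists>z\<in>S. dk E k' x z \<noteq> dk E k' y z" by blast
qed

lemma goodM_check:
  assumes A: "\<forall>t\<in>set (transv ps). resolving_k V E k (M0 \<union> set t)"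
  shows "goodM V E k (pset ps) M0"
  unfolding goodM_def
proof (intro allI impI)
  fix M' assume M': "M0 \<subseteq> M' \<and> M' \<subseteq> V \<and> (\<forall>p\<in>pset ps. p \<inter> M' \<noteq> {})"
  then have "\<forall>p\<in>pset ps. p \<inter> M' \<noteq> {}" by (elim conjE)
  from trans_hit[OF this] obtain t where t: "t \<in> set (transv ps)" "set t \<subseteq> M'" by blast
  have r: "resolving_k V E k (M0 \<union> set t)" using A t(1) by (rule bspec)
  have s1: "M0 \<union> set t \<subseteq> M'" using M' t(2) by (elim conjE) (rule Un_least)
  have s2: "M' \<subseteq> V" using M' by (elim conjE)
  show "resolving_k V E k M'" by (rule resolving_mono[OF r s1 s2])
qed

lemma goodB_check:
  assumes A: "\<forall>t\<in>set (transv ps). \<not> resolving_k V E k (V - B0 - set t)"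
  shows "goodB V E k (pset ps) B0"
  unfolding goodB_def
proof (intro allI impI)
  fix M' assume M': "M' \<subseteq> V - B0 \<and> (\<forall>p\<in>pset ps. \<not> p \<subseteq> M')"
  then have "\<forall>p\<in>pset ps. \<not> p \<subseteq> M'" by (elim conjE)
  from trans_avoid[OF this] obtain t where t: "t \<in> set (transv ps)" "set t \<inter> M' = {}" by blast
  have nr: "\<not> resolving_k V E k (V - B0 - set t)" using A t(1) by (rule bspec)
  have s1: "M' \<subseteq> V - B0 - set t" using M' t(2) by blast
  have s2: "V - B0 - set t \<subseteq> V" by (rule Diff_subset[THEN subset_trans]) (rule Diff_subset)
  show "\<not> resolving_k V E k M'"
  proof
    assume "resolving_k V E k M'"
    from resolving_mono[OF this s1 s2] nr show False by contradiction
  qed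
qed

lemma goodM_mono_k:
  assumes g: "goodM V E k P M0" and kk: "k \<le> k'" shows "goodM V E k' P M0"
  unfolding goodM_def
proof (intro allI impI)
  fix M' assume "M0 \<subseteq> M' \<and> M' \<subseteq> V \<and> (\<forall>p\<in>P. p \<inter> M' \<noteq> {})"
  with g have "resolving_k V E k M'" unfolding goodM_def by (elim allE impE)
  then show "resolving_k V E k' M'" by (rule resolving_mono_k[OF _ kk])
qed

lemma goodM_mono:
  assumes g: "goodM V E k P M0" and s: "M0 \<subseteq> M1" shows "goodM V E k P M1"
  unfolding goodM_def
proof (intro allI impI)
  fix M' assume h: "M1 \<subseteq> M' \<and> M' \<subseteq> V \<and> (\<forall>p\<in>P. p \<inter> M' \<noteq> {})"
  then have "M0 \<subseteq> M' \<and> M' \<subseteq> V \<and> (\<forall>p\<in>P. p \<inter> M' \<noteq> {})" using s by blast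
  with g show "resolving_k V E k M'" unfolding goodM_def by (elim allE impE)
qed

lemma goodB_mono:
  assumes g: "goodB V E k P B0" and s: "B0 \<subseteq> B1" shows "goodB V E k P B1"
  unfolding goodB_def
proof (intro allI impI)
  fix M' assume h: "M' \<subseteq> V - B1 \<and> (\<forall>p\<in>P. \<not> p \<subseteq> M')"
  then have "M' \<subseteq> V - B0 \<and> (\<forall>p\<in>P. \<not> p \<subseteq> M')" using s by blast
  with g show "\<not> resolving_k V E k M'" unfolding goodB_def by (elim allE impE)
qed

lemma resolving_D:
  assumes G: "\<forall>x\<in>V. \<forall>z\<in>V. gdist E x z = D x z"
  shows "resolving_k V E k S = resolvingDk V D k S"
proof (cases "S \<subseteq> V")
  case True
  have eq: "\<forall>x\<in>V. \<forall>y\<in>V. \<forall>z\<in>S. (dk E k x z \<noteq> dk E k y z) = (min (D x z) (k + 1) \<noteq> min (D y z) (k + 1))"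
  proof (intro ballI)
    fix x y z assume "x \<in> V" "y \<in> V" "z \<in> S"
    then have "z \<in> V" using True by blast
    then have "gdist E x z = D x z" "gdist E y z = D y z" using G \<open>x \<in> V\<close> \<open>y \<in> V\<close> by blast+
    then show "(dk E k x z \<noteq> dk E k y z) = (min (D x z) (k + 1) \<noteq> min (D y z) (k + 1))"
      by (simp add: dk_def)
  qed
  have "(\<forall>x\<in>V. \<forall>y\<in>V. x \<noteq> y \<longrightarrow> (\<exists>z\<in>S. dk E k x z \<noteq> dk E k y z)) =
        (\<forall>x\<in>V. \<forall>y\<in>V. x \<noteq> y \<longrightarrow> (\<exists>z\<in>S. min (D x z) (k + 1) \<noteq> min (D y z) (k + 1)))"
    using eq by (intro ball_cong refl imp_cong bex_cong) blast+
  then show ?thesis unfolding resolving_k_def resolvingDk_def by simp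
next
  case False
  then show ?thesis by (simp add: resolving_k_def resolvingDk_def)
qed

lemma resolvingDk_big:
  assumes Dle: "\<forall>x\<in>V. \<forall>z\<in>V. D x z \<le> k0 + 1" and kk: "k0 \<le> k"
  shows "resolvingDk V D k S = resolvingDk V D k0 S"
proof (cases "S \<subseteq> V")
  case True
  have eq: "\<forall>x\<in>V. \<forall>z\<in>S. min (D x z) (k + 1) = min (D x z) (k0 + 1)"
  proof (intro ballI)
    fix x z assume "x \<in> V" "z \<in> S"
    then have "D x z \<le> k0 + 1" using Dle True by blast
    then show "min (D x z) (k + 1) = min (D x z) (k0 + 1)" using kk by simp
  qed
  have "(\<forall>x\<in>V. \<forall>y\<in>V. x \<noteq> y \<longrightarrow> (\<exists>z\<in>S. min (D x z) (k + 1) \<noteq> min (D y z) (k + 1))) =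
        (\<forall>x\<in>V. \<forall>y\<in>V. x \<noteq> y \<longrightarrow> (\<exists>z\<in>S. min (D x z) (k0 + 1) \<noteq> min (D y z) (k0 + 1)))"
    using eq by (intro ball_cong refl imp_cong bex_cong) simp_all
  then show ?thesis unfolding resolvingDk_def by simp
next
  case False
  then show ?thesis by (simp add: resolvingDk_def)
qed

lemma goodB_all_k:
  assumes G: "\<forall>x\<in>V. \<forall>z\<in>V. gdist E x z = D x z" and Dle: "\<forall>x\<in>V. \<forall>z\<in>V. D x z \<le> k0 + 1"
    and gb: "goodB V E k0 P B0"
  shows "goodB V E k P B0"
proof (cases "k \<le> k0")
  case True
  show ?thesis using gb unfolding goodB_def
    using resolving_mono_k[OF _ True] by blast
next
  case False
  have "resolving_k V E k S = resolving_k V E k0 S" for S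
    using resolving_D[OF G] resolvingDk_big[OF Dle, of k] False by simp
  then show ?thesis using gb unfolding goodB_def by simp
qed

lemma maker_second:
  assumes "finite V" "pairs_ok V P" "goodM V E k P {}"
  shows "maker_wins V E k {} {} False"
  by (rule maker_pairing[OF assms]) auto

lemma maker_first:
  assumes "finite V" "pairs_ok V P" "goodM V E k P {a}" "a \<in> V"
  shows "maker_wins V E k {} {} True"
proof (rule mw_maker[of a])
  show "a \<in> V - ({} \<union> {})" using assms(4) by simp
  show "maker_wins V E k (insert a {}) {} False"
    by (rule maker_pairing[OF assms(1,2)]) (use assms(3,4) in auto)
qed

lemma breaker_second:
  assumes "finite V" "pairs_ok V P" "goodB V E k P {}"
  shows "breaker_wins V E k {} {} True"
  by (rule breaker_pairing[OF assms]) auto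

lemma breaker_first:
  assumes "finite V" "pairs_ok V P" "goodB V E k P {b}" "b \<in> V"
  shows "breaker_wins V E k {} {} False"
proof (rule bw_breaker[of b])
  show "b \<in> V - ({} \<union> {})" using assms(4) by simp
  show "breaker_wins V E k {} (insert b {}) True"
    by (rule breaker_pairing[OF assms(1,2)]) (use assms(3,4) in auto)
qed

lemma goodM_checkD:
  assumes "\<forall>x\<in>V. \<forall>z\<in>V. gdist E x z = D x z"
    and "\<forall>t\<in>set (transv ps). resolvingDk V D k (M0 \<union> set t)"
  shows "goodM V E k (pset ps) M0"
  using goodM_check[of ps V E k M0] assms resolving_D[OF assms(1)] by simp

lemma goodB_checkD:
  assumes "\<forall>x\<in>V. \<forall>z\<in>V. gdist E x z = D x z"
    and "\<forall>t\<in>set (transv ps). \<not> resolvingDk V D k (V - B0 - set t)"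
  shows "goodB V E k (pset ps) B0"
  using goodB_check[of ps V E k B0] assms resolving_D[OF assms(1)] by simp

lemma conn_from_table:
  assumes fin: "finite V" and ne: "V \<noteq> {}" and EV: "\<forall>u w. E u w \<longrightarrow> u \<in> V \<and> w \<in> V"
    and sym: "\<forall>x y. E x y \<longrightarrow> E y x" and irr: "\<forall>x. \<not> E x x"
    and T: "\<forall>x\<in>V. \<forall>z\<in>V. (x, z) \<in> (edges E) ^^ (D x z) \<and> gdist E x z = D x z"
  shows "conn_graph V E"
  unfolding conn_graph_def
proof (intro conjI)
  show "\<forall>x\<in>V. \<forall>y\<in>V. (x, y) \<in> (edges E)\<^sup>*"
    using T relpow_imp_rtrancl by blast
qed (use assms in auto)


lemma outcome_M_from:
  assumes "finite V" "pairs_ok V P" "goodM V E k P {}" "a \<in> V"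
  shows "O_R k V E = Outcome_M"
  by (rule OR_M[OF maker_first[OF assms(1,2) goodM_mono[OF assms(3)] assms(4)] maker_second[OF assms(1-3)]]) simp

lemma outcome_B_from:
  assumes "finite V" "pairs_ok V P" "goodB V E k P {}" "b \<in> V"
  shows "O_R k V E = Outcome_B"
  by (rule OR_B[OF breaker_second[OF assms(1-3)] breaker_first[OF assms(1,2) goodB_mono[OF assms(3)] assms(4)]]) simp

lemma outcome_N_from:
  assumes "finite V" "pairs_ok V P1" "goodM V E k P1 {a}" "a \<in> V"
    "pairs_ok V P2" "goodB V E k P2 {b}" "b \<in> V"
  shows "O_R k V E = Outcome_N"
  by (rule OR_N[OF maker_first[OF assms(1-4)] breaker_first[OF assms(1) assms(5-7)]])


lemma rp_Suc: "(x, z) \<in> R ^^ Suc n \<longleftrightarrow> (\<exists>w. (x, w) \<in> R \<and> (w, z) \<in> R ^^ n)"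
  using relpow_Suc_D2[of x z n R] relpow_Suc_I2[of x _ R z n] by blast

lemma rp0: "(x, z) \<in> edges E ^^ 0 \<longleftrightarrow> x = z" by simp

lemma rp1: "(x, z) \<in> edges E ^^ 1 \<longleftrightarrow> E x z"
  by (simp add: edges_def)

lemma rp2: "(x, z) \<in> edges E ^^ 2 \<longleftrightarrow> (\<exists>w. E x w \<and> E w z)"
proof -
  have "(2::nat) = Suc 1" by simp
  then show ?thesis by (simp only: rp_Suc rp1) (simp add: edges_def)
qed

lemma rp3: "(x, z) \<in> edges E ^^ 3 \<longleftrightarrow> (\<exists>w1 w2. E x w1 \<and> E w1 w2 \<and> E w2 z)"
proof -
  have "(3::nat) = Suc 2" by simp
  then show ?thesis by (simp only: rp_Suc rp2) (simp add: edges_def)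
qed

lemma gd_walk:
  assumes "(x, z) \<in> (edges E)\<^sup>*"
  shows "(x, z) \<in> (edges E) ^^ (gdist E x z)"
proof -
  obtain n where "(x, z) \<in> (edges E) ^^ n" using assms rtrancl_power by blast
  then show ?thesis unfolding gdist_def by (rule LeastI)
qed

lemma gd_le: "(x, z) \<in> (edges E) ^^ n \<Longrightarrow> gdist E x z \<le> n"
  unfolding gdist_def by (rule Least_le)

lemma gd_eq:
  assumes w: "(x, z) \<in> (edges E)\<^sup>*"
  shows "gdist E x z = n \<longleftrightarrow> ((x, z) \<in> (edges E) ^^ n \<and> (\<forall>m<n. (x, z) \<notin> (edges E) ^^ m))"
proof
  assume h: "gdist E x z = n"
  have "(x, z) \<in> (edges E) ^^ n" using gd_walk[OF w] h by simp
  moreover have "\<forall>m<n. (x, z) \<notin> (edges E) ^^ m"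
  proof (intro allI impI notI)
    fix m assume "m < n" "(x, z) \<in> (edges E) ^^ m"
    then have "gdist E x z \<le> m" by (intro gd_le)
    with h \<open>m < n\<close> show False by simp
  qed
  ultimately show "(x, z) \<in> (edges E) ^^ n \<and> (\<forall>m<n. (x, z) \<notin> (edges E) ^^ m)" by blast
next
  assume h: "(x, z) \<in> (edges E) ^^ n \<and> (\<forall>m<n. (x, z) \<notin> (edges E) ^^ m)"
  show "gdist E x z = n" unfolding gdist_def
  proof (rule Least_equality)
    show "(x, z) \<in> edges E ^^ n" using h by blast
  next
    fix m assume m: "(x, z) \<in> edges E ^^ m"
    show "n \<le> m"
    proof (rule ccontr)
      assume "\<not> n \<le> m"
      then have "m < n" by simp
      with h m show False by blast
    qed
  qed
qed

lemma all1: "(\<forall>m<(1::nat). P m) \<longleftrightarrow> P 0" by auto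
lemma all2: "(\<forall>m<(2::nat). P m) \<longleftrightarrow> P 0 \<and> P 1"
  by (auto simp: less_Suc_eq numeral_2_eq_2)
lemma all3: "(\<forall>m<(3::nat). P m) \<longleftrightarrow> P 0 \<and> P 1 \<and> P 2"
  by (auto simp: less_Suc_eq numeral_3_eq_3 numeral_2_eq_2)

lemma gd0: "(x, z) \<in> (edges E)\<^sup>* \<Longrightarrow> gdist E x z = 0 \<longleftrightarrow> x = z"
  by (simp only: gd_eq rp0) blast

lemma gd1: "(x, z) \<in> (edges E)\<^sup>* \<Longrightarrow> gdist E x z = 1 \<longleftrightarrow> E x z \<and> x \<noteq> z"
  by (simp only: gd_eq all1 rp1 rp0)

lemma gd2: "(x, z) \<in> (edges E)\<^sup>* \<Longrightarrow>
   gdist E x z = 2 \<longleftrightarrow> (\<exists>w. E x w \<and> E w z) \<and> \<not> E x z \<and> x \<noteq> z"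
  by (simp only: gd_eq all2 rp2 rp1 rp0) blast

lemma gd3: "(x, z) \<in> (edges E)\<^sup>* \<Longrightarrow>
   gdist E x z = 3 \<longleftrightarrow> (\<exists>w1 w2. E x w1 \<and> E w1 w2 \<and> E w2 z) \<and> \<not> (\<exists>w. E x w \<and> E w z) \<and> \<not> E x z \<and> x \<noteq> z"
  by (simp only: gd_eq all3 rp3 rp2 rp1 rp0) blast

lemma dk_neq:
  assumes "a \<le> k" "gdist E x z = a" "gdist E y z \<noteq> a"
  shows "dk E k x z \<noteq> dk E k y z"
  using assms unfolding dk_def by (auto simp: min_def split: if_splits)

lemma dk1:
  assumes "(x, z) \<in> (edges E)\<^sup>*"
  shows "dk E 1 x z = (if x = z then 0 else if E x z then 1 else 2)"
proof -
  have "gdist E x z = 0 \<longleftrightarrow> x = z" by (rule gd0[OF assms])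
  moreover have "gdist E x z = 1 \<longleftrightarrow> E x z \<and> x \<noteq> z" by (rule gd1[OF assms])
  ultimately show ?thesis unfolding dk_def by (auto simp: min_def)
qed

lemma dk2:
  assumes "(x, z) \<in> (edges E)\<^sup>*"
  shows "dk E 2 x z = (if x = z then 0 else if E x z then 1 else if (\<exists>w. E x w \<and> E w z) then 2 else 3)"
proof -
  have "gdist E x z = 0 \<longleftrightarrow> x = z" by (rule gd0[OF assms])
  moreover have "gdist E x z = 1 \<longleftrightarrow> E x z \<and> x \<noteq> z" by (rule gd1[OF assms])
  moreover have "gdist E x z = 2 \<longleftrightarrow> (\<exists>w. E x w \<and> E w z) \<and> \<not> E x z \<and> x \<noteq> z" by (rule gd2[OF assms])
  ultimately show ?thesis unfolding dk_def by (auto simp: min_def)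
qed


lemma Pv_in[simp]: "Pv i \<in> gV a \<longleftrightarrow> 1 \<le> i \<and> i \<le> a" by (auto simp: gV_def)
lemma Lv_in[simp]: "Lv i \<in> gV a \<longleftrightarrow> 1 \<le> i \<and> i \<le> a" by (auto simp: gV_def)
lemma Lv'_in[simp]: "Lv' i \<in> gV a \<longleftrightarrow> 1 \<le> i \<and> i \<le> a" by (auto simp: gV_def)
lemma Sv_in[simp]: "Sv i \<in> gV a \<longleftrightarrow> 1 \<le> i \<and> i \<le> a" by (auto simp: gV_def)
lemma Sv'_in[simp]: "Sv' i \<in> gV a \<longleftrightarrow> 1 \<le> i \<and> i \<le> a" by (auto simp: gV_def)
lemma Xv_in[simp]: "Xv i \<in> gV a \<longleftrightarrow> 1 \<le> i \<and> i \<le> a" by (auto simp: gV_def)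
lemma Yv_in[simp]: "Yv \<in> gV a" by (auto simp: gV_def)
lemma Zv_in[simp]: "Zv \<in> gV a" by (auto simp: gV_def)

lemma gE_L1[simp]: "gE a (Lv i) w \<longleftrightarrow> 1 \<le> i \<and> i \<le> a \<and> w = Pv i"
  by (auto simp: gE_def gE0_def)
lemma gE_L2[simp]: "gE a w (Lv i) \<longleftrightarrow> 1 \<le> i \<and> i \<le> a \<and> w = Pv i"
  by (auto simp: gE_def gE0_def)
lemma gE_L'1[simp]: "gE a (Lv' i) w \<longleftrightarrow> 1 \<le> i \<and> i \<le> a \<and> w = Pv i"
  by (auto simp: gE_def gE0_def)
lemma gE_L'2[simp]: "gE a w (Lv' i) \<longleftrightarrow> 1 \<le> i \<and> i \<le> a \<and> w = Pv i"
  by (auto simp: gE_def gE0_def)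
lemma gE_S1[simp]: "gE a (Sv i) w \<longleftrightarrow> 1 \<le> i \<and> i \<le> a \<and> (w = Pv i \<or> w = Xv i)"
  by (auto simp: gE_def gE0_def)
lemma gE_S2[simp]: "gE a w (Sv i) \<longleftrightarrow> 1 \<le> i \<and> i \<le> a \<and> (w = Pv i \<or> w = Xv i)"
  by (auto simp: gE_def gE0_def)
lemma gE_S'1[simp]: "gE a (Sv' i) w \<longleftrightarrow> 1 \<le> i \<and> i \<le> a \<and> (w = Pv i \<or> w = Xv i)"
  by (auto simp: gE_def gE0_def)
lemma gE_S'2[simp]: "gE a w (Sv' i) \<longleftrightarrow> 1 \<le> i \<and> i \<le> a \<and> (w = Pv i \<or> w = Xv i)"
  by (auto simp: gE_def gE0_def)
lemma gE_X1[simp]: "gE a (Xv i) w \<longleftrightarrow> 1 \<le> i \<and> i \<le> a \<and> (w = Sv i \<or> w = Sv' i \<or> w = Yv)"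
  by (auto simp: gE_def gE0_def)
lemma gE_X2[simp]: "gE a w (Xv i) \<longleftrightarrow> 1 \<le> i \<and> i \<le> a \<and> (w = Sv i \<or> w = Sv' i \<or> w = Yv)"
  by (auto simp: gE_def gE0_def)
lemma gE_Y1[simp]: "gE a Yv w \<longleftrightarrow> (\<exists>i. 1 \<le> i \<and> i \<le> a \<and> w = Xv i) \<or> w = Zv"
  by (auto simp: gE_def gE0_def)
lemma gE_Y2[simp]: "gE a w Yv \<longleftrightarrow> (\<exists>i. 1 \<le> i \<and> i \<le> a \<and> w = Xv i) \<or> w = Zv"
  by (auto simp: gE_def gE0_def)
lemma gE_Z1[simp]: "gE a Zv w \<longleftrightarrow> w = Yv"
  by (auto simp: gE_def gE0_def)
lemma gE_Z2[simp]: "gE a w Zv \<longleftrightarrow> w = Yv"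
  by (auto simp: gE_def gE0_def)
lemma gE_PP[simp]: "gE a (Pv i) (Pv j) \<longleftrightarrow> 1 \<le> i \<and> i \<le> a \<and> 1 \<le> j \<and> j \<le> a \<and> (j = Suc i \<or> i = Suc j)"
  by (auto simp: gE_def gE0_def)

lemma gE_sym: "gE a u w \<longleftrightarrow> gE a w u"
  by (auto simp: gE_def)

lemma gE_irr: "\<not> gE a u u"
  by (cases u) auto

lemma gE_V: "gE a u w \<Longrightarrow> u \<in> gV a \<and> w \<in> gV a"
  by (cases u; cases w) auto

lemma ed: "gE a u w \<Longrightarrow> (u, w) \<in> edges (gE a)"
  by (simp add: edges_def)

lemma toY: "x \<in> gV a \<Longrightarrow> (x, Yv) \<in> (edges (gE a))\<^sup>*"
proof (cases x)
  case (Pv i)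
  assume "x \<in> gV a"
  then have i: "1 \<le> i" "i \<le> a" using Pv by auto
  have "(Pv i, Sv i) \<in> edges (gE a)" "(Sv i, Xv i) \<in> edges (gE a)" "(Xv i, Yv) \<in> edges (gE a)"
    using i by (auto intro!: ed)
  then show ?thesis using Pv by (meson converse_rtrancl_into_rtrancl r_into_rtrancl)
next
  case (Lv i)
  assume "x \<in> gV a"
  then have i: "1 \<le> i" "i \<le> a" using Lv by auto
  have "(Lv i, Pv i) \<in> edges (gE a)" "(Pv i, Sv i) \<in> edges (gE a)" "(Sv i, Xv i) \<in> edges (gE a)" "(Xv i, Yv) \<in> edges (gE a)"
    using i by (auto intro!: ed)
  then show ?thesis using Lv by (meson converse_rtrancl_into_rtrancl r_into_rtrancl)
next
  case (Lv' i)
  assume "x \<in> gV a"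
  then have i: "1 \<le> i" "i \<le> a" using Lv' by auto
  have "(Lv' i, Pv i) \<in> edges (gE a)" "(Pv i, Sv i) \<in> edges (gE a)" "(Sv i, Xv i) \<in> edges (gE a)" "(Xv i, Yv) \<in> edges (gE a)"
    using i by (auto intro!: ed)
  then show ?thesis using Lv' by (meson converse_rtrancl_into_rtrancl r_into_rtrancl)
next
  case (Sv i)
  assume "x \<in> gV a"
  then have i: "1 \<le> i" "i \<le> a" using Sv by auto
  have "(Sv i, Xv i) \<in> edges (gE a)" "(Xv i, Yv) \<in> edges (gE a)"
    using i by (auto intro!: ed)
  then show ?thesis using Sv by (meson converse_rtrancl_into_rtrancl r_into_rtrancl)
next
  case (Sv' i)
  assume "x \<in> gV a"
  then have i: "1 \<le> i" "i \<le> a" using Sv' by auto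
  have "(Sv' i, Xv i) \<in> edges (gE a)" "(Xv i, Yv) \<in> edges (gE a)"
    using i by (auto intro!: ed)
  then show ?thesis using Sv' by (meson converse_rtrancl_into_rtrancl r_into_rtrancl)
next
  case (Xv i)
  assume "x \<in> gV a"
  then have i: "1 \<le> i" "i \<le> a" using Xv by auto
  have "(Xv i, Yv) \<in> edges (gE a)"
    using i by (auto intro!: ed)
  then show ?thesis using Xv by (meson r_into_rtrancl)
next
  case Yv
  then show ?thesis by simp
next
  case Zv
  have "(Zv, Yv) \<in> edges (gE a)" by (auto intro!: ed)
  then show ?thesis using Zv by (meson r_into_rtrancl)
qed

lemma edges_conv: "(edges (gE a))\<inverse> = edges (gE a)"
  by (auto simp: edges_def gE_sym)

lemma conn_walk: "x \<in> gV a \<Longrightarrow> z \<in> gV a \<Longrightarrow> (x, z) \<in> (edges (gE a))\<^sup>*"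
proof -
  assume x: "x \<in> gV a" and z: "z \<in> gV a"
  have "(z, Yv) \<in> (edges (gE a))\<^sup>*" by (rule toY[OF z])
  then have "(Yv, z) \<in> ((edges (gE a))\<inverse>)\<^sup>*" by (rule rtrancl_converseI)
  then have "(Yv, z) \<in> (edges (gE a))\<^sup>*" by (simp only: edges_conv)
  with toY[OF x] show ?thesis by (rule rtrancl_trans)
qed

lemma gV_finite: "finite (gV a)"
  by (simp add: gV_def)

lemma g_conn: "conn_graph (gV a) (gE a)"
  unfolding conn_graph_def
proof (intro conjI)
  show "finite (gV a)" by (rule gV_finite)
  show "gV a \<noteq> {}" using Yv_in by blast
  show "\<forall>x y. gE a x y \<longrightarrow> x \<in> gV a \<and> y \<in> gV a" using gE_V by blast
  show "\<forall>x y. gE a x y \<longrightarrow> gE a y x" using gE_sym by blast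
  show "\<forall>x. \<not> gE a x x" using gE_irr by blast
  show "\<forall>x\<in>gV a. \<forall>y\<in>gV a. (x, y) \<in> (edges (gE a))\<^sup>*" using conn_walk by blast
qed


lemma g0: "x \<in> gV a \<Longrightarrow> z \<in> gV a \<Longrightarrow> gdist (gE a) x z = 0 \<longleftrightarrow> x = z"
  by (rule gd0[OF conn_walk])
lemma g1: "x \<in> gV a \<Longrightarrow> z \<in> gV a \<Longrightarrow> gdist (gE a) x z = 1 \<longleftrightarrow> gE a x z \<and> x \<noteq> z"
  by (rule gd1[OF conn_walk])
lemma g2: "x \<in> gV a \<Longrightarrow> z \<in> gV a \<Longrightarrow>
  gdist (gE a) x z = 2 \<longleftrightarrow> (\<exists>w. gE a x w \<and> gE a w z) \<and> \<not> gE a x z \<and> x \<noteq> z"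
  by (rule gd2[OF conn_walk])
lemma g3: "x \<in> gV a \<Longrightarrow> z \<in> gV a \<Longrightarrow>
  gdist (gE a) x z = 3 \<longleftrightarrow> (\<exists>w1 w2. gE a x w1 \<and> gE a w1 w2 \<and> gE a w2 z) \<and> \<not> (\<exists>w. gE a x w \<and> gE a w z) \<and> \<not> gE a x z \<and> x \<noteq> z"
  by (rule gd3[OF conn_walk])

definition isL :: "nat \<Rightarrow> gvert \<Rightarrow> bool" where
  "isL a x \<longleftrightarrow> (\<exists>i. 1 \<le> i \<and> i \<le> a \<and> (x = Lv i \<or> x = Lv' i))"
definition isS :: "nat \<Rightarrow> gvert \<Rightarrow> bool" where
  "isS a x \<longleftrightarrow> (\<exists>i. 1 \<le> i \<and> i \<le> a \<and> (x = Sv i \<or> x = Sv' i))"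

lemma classify:
  assumes "x \<in> gV a" "\<forall>j. x \<noteq> Pv j" "\<forall>j. x \<noteq> Xv j"
  shows "isL a x \<or> isS a x \<or> x = Yv \<or> x = Zv"
proof (cases x)
  case (Pv i) then show ?thesis using assms(2) by blast
next
  case (Xv i) then show ?thesis using assms(3) by blast
next
  case (Lv i) then have "1 \<le> i \<and> i \<le> a" using assms(1) by simp
  then have "isL a x" unfolding isL_def using Lv by blast
  then show ?thesis by blast
next
  case (Lv' i) then have "1 \<le> i \<and> i \<le> a" using assms(1) by simp
  then have "isL a x" unfolding isL_def using Lv' by blast
  then show ?thesis by blast
next
  case (Sv i) then have "1 \<le> i \<and> i \<le> a" using assms(1) by simp
  then have "isS a x" unfolding isS_def using Sv by blast
  then show ?thesis by blast
next
  case (Sv' i) then have "1 \<le> i \<and> i \<le> a" using assms(1) by simp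
  then have "isS a x" unfolding isS_def using Sv' by blast
  then show ?thesis by blast
qed simp_all

lemma sep_sym:
  assumes "\<exists>z\<in>M. dk E k x z \<noteq> dk E k y z"
  shows "\<exists>z\<in>M. dk E k y z \<noteq> dk E k x z"
proof -
  obtain z where z: "z \<in> M" "dk E k x z \<noteq> dk E k y z" using assms by blast
  have "dk E k y z \<noteq> dk E k x z" using z(2) by (rule not_sym)
  with z(1) show ?thesis by blast
qed

lemma sepI:
  assumes "z \<in> M" "b \<le> k" "gdist E x z = b" "gdist E y z \<noteq> b"
  shows "\<exists>z\<in>M. dk E k x z \<noteq> dk E k y z"
proof -
  have "dk E k x z \<noteq> dk E k y z" by (rule dk_neq[OF assms(2-4)])
  with assms(1) show ?thesis by blast
qed

context
  fixes a :: nat and M :: "gvert set" and k :: nat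
  assumes MV: "M \<subseteq> gV a"
    and TW: "\<And>i. 1 \<le> i \<Longrightarrow> i \<le> a \<Longrightarrow> (Lv i \<in> M \<or> Lv' i \<in> M) \<and> (Sv i \<in> M \<or> Sv' i \<in> M)"
    and K2: "2 \<le> k"
    and YZ: "Yv \<in> M \<or> (Zv \<in> M \<and> 3 \<le> k)"
begin

lemma sepM:
  assumes "x \<in> M" "y \<in> gV a" "y \<noteq> x"
  shows "\<exists>z\<in>M. dk (gE a) k x z \<noteq> dk (gE a) k y z"
proof (rule sepI[of x _ 0])
  have xV: "x \<in> gV a" using assms MV by blast
  show "x \<in> M" by fact
  show "0 \<le> k" by simp
  show "gdist (gE a) x x = 0" using g0[OF xV xV] by simp
  show "gdist (gE a) y x \<noteq> 0" using g0[OF assms(2) xV] assms(3) by simp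
qed

lemma sepP:
  assumes j: "1 \<le> j" "j \<le> a" and y: "y \<in> gV a" "y \<noteq> Pv j"
  shows "\<exists>z\<in>M. dk (gE a) k (Pv j) z \<noteq> dk (gE a) k y z"
proof -
  obtain l where l: "l \<in> M" "l = Lv j \<or> l = Lv' j" using TW[OF j] by blast
  have lV: "l \<in> gV a" using l MV by blast
  have PV: "Pv j \<in> gV a" using j by simp
  show ?thesis
  proof (rule sepI[OF l(1), of 1])
    show "1 \<le> k" using K2 by simp
    show "gdist (gE a) (Pv j) l = 1" using g1[OF PV lV] l(2) j by auto
    show "gdist (gE a) y l \<noteq> 1" using g1[OF y(1) lV] l(2) y(2) by auto
  qed
qed

lemma sepX:
  assumes j: "1 \<le> j" "j \<le> a" and y: "y \<in> gV a" "y \<noteq> Xv j" "\<forall>i. y \<noteq> Pv i"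
  shows "\<exists>z\<in>M. dk (gE a) k (Xv j) z \<noteq> dk (gE a) k y z"
proof -
  obtain s where s: "s \<in> M" "s = Sv j \<or> s = Sv' j" using TW[OF j] by blast
  have sV: "s \<in> gV a" using s MV by blast
  have XV: "Xv j \<in> gV a" using j by simp
  show ?thesis
  proof (rule sepI[OF s(1), of 1])
    show "1 \<le> k" using K2 by simp
    show "gdist (gE a) (Xv j) s = 1" using g1[OF XV sV] s(2) j by auto
    show "gdist (gE a) y s \<noteq> 1" using g1[OF y(1) sV] s(2) y(2,3) by auto
  qed
qed

lemma sepLL:
  assumes x: "isL a x" "x \<notin> M" and y: "isL a y" "y \<notin> M" and xy: "x \<noteq> y"
  shows "\<exists>z\<in>M. dk (gE a) k x z \<noteq> dk (gE a) k y z"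
proof -
  obtain i where i: "1 \<le> i" "i \<le> a" "x = Lv i \<or> x = Lv' i" using x(1) by (auto simp: isL_def)
  obtain j where j: "1 \<le> j" "j \<le> a" "y = Lv j \<or> y = Lv' j" using y(1) by (auto simp: isL_def)
  have ij: "i \<noteq> j"
  proof
    assume "i = j"
    then have "Lv i \<notin> M \<and> Lv' i \<notin> M" using i(3) j(3) x(2) y(2) xy by auto
    with TW[OF i(1,2)] show False by blast
  qed
  obtain l where l: "l \<in> M" "l = Lv i \<or> l = Lv' i" using TW[OF i(1,2)] by blast
  have lV: "l \<in> gV a" using l MV by blast
  have xV: "x \<in> gV a" using i by auto
  have yV: "y \<in> gV a" using j by auto
  have xl: "x \<noteq> l" using x(2) l(1) by blast
  show ?thesis
  proof (rule sepI[OF l(1), of 2])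
    show "2 \<le> k" by (rule K2)
    have "gE a x (Pv i)" "gE a (Pv i) l" using i l(2) by auto
    moreover have "\<not> gE a x l" using i(3) l(2) by auto
    ultimately show "gdist (gE a) x l = 2" using g2[OF xV lV] xl by blast
    have "\<not> (\<exists>w. gE a y w \<and> gE a w l)" using j(3) l(2) ij by auto
    then show "gdist (gE a) y l \<noteq> 2" using g2[OF yV lV] by blast
  qed
qed

lemma sepSS:
  assumes x: "isS a x" "x \<notin> M" and y: "isS a y" "y \<notin> M" and xy: "x \<noteq> y"
  shows "\<exists>z\<in>M. dk (gE a) k x z \<noteq> dk (gE a) k y z"
proof -
  obtain i where i: "1 \<le> i" "i \<le> a" "x = Sv i \<or> x = Sv' i" using x(1) by (auto simp: isS_def)
  obtain j where j: "1 \<le> j" "j \<le> a" "y = Sv j \<or> y = Sv' j" using y(1) by (auto simp: isS_def)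
  have ij: "i \<noteq> j"
  proof
    assume "i = j"
    then have "Sv i \<notin> M \<and> Sv' i \<notin> M" using i(3) j(3) x(2) y(2) xy by auto
    with TW[OF i(1,2)] show False by blast
  qed
  obtain l where l: "l \<in> M" "l = Sv i \<or> l = Sv' i" using TW[OF i(1,2)] by blast
  have lV: "l \<in> gV a" using l MV by blast
  have xV: "x \<in> gV a" using i by auto
  have yV: "y \<in> gV a" using j by auto
  have xl: "x \<noteq> l" using x(2) l(1) by blast
  show ?thesis
  proof (rule sepI[OF l(1), of 2])
    show "2 \<le> k" by (rule K2)
    have "gE a x (Pv i)" "gE a (Pv i) l" using i l(2) by auto
    moreover have "\<not> gE a x l" using i(3) l(2) by auto
    ultimately show "gdist (gE a) x l = 2" using g2[OF xV lV] xl by blast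
    have "\<not> (\<exists>w. gE a y w \<and> gE a w l)" using j(3) l(2) ij by auto
    then show "gdist (gE a) y l \<noteq> 2" using g2[OF yV lV] by blast
  qed
qed

lemma sepSL:
  assumes x: "isS a x" "x \<notin> M" and y: "isL a y" "y \<notin> M"
  shows "\<exists>z\<in>M. dk (gE a) k x z \<noteq> dk (gE a) k y z"
proof -
  obtain i where i: "1 \<le> i" "i \<le> a" "x = Sv i \<or> x = Sv' i" using x(1) by (auto simp: isS_def)
  obtain j where j: "1 \<le> j" "j \<le> a" "y = Lv j \<or> y = Lv' j" using y(1) by (auto simp: isL_def)
  have xV: "x \<in> gV a" using i by auto
  have yV: "y \<in> gV a" using j by auto
  show ?thesis
  proof (cases "Yv \<in> M")
    case True
    show ?thesis
    proof (rule sepI[OF True, of 2])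
      show "2 \<le> k" by (rule K2)
      have "gE a x (Xv i)" "gE a (Xv i) Yv" using i by auto
      moreover have "\<not> gE a x Yv" "x \<noteq> Yv" using i(3) by auto
      ultimately show "gdist (gE a) x Yv = 2" using g2[OF xV Yv_in] by blast
      have "\<not> (\<exists>w. gE a y w \<and> gE a w Yv)" using j(3) by auto
      then show "gdist (gE a) y Yv \<noteq> 2" using g2[OF yV Yv_in] by blast
    qed
  next
    case False
    then have Z: "Zv \<in> M" "3 \<le> k" using YZ by auto
    show ?thesis
    proof (rule sepI[OF Z(1), of 3])
      show "3 \<le> k" by (rule Z(2))
      have "gE a x (Xv i)" "gE a (Xv i) Yv" "gE a Yv Zv" using i by auto
      moreover have "\<not> (\<exists>w. gE a x w \<and> gE a w Zv)" "\<not> gE a x Zv" "x \<noteq> Zv" using i(3) by auto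
      ultimately show "gdist (gE a) x Zv = 3" using g3[OF xV Zv_in] by blast
      have "\<not> (\<exists>w1 w2. gE a y w1 \<and> gE a w1 w2 \<and> gE a w2 Zv)" using j(3) by auto
      then show "gdist (gE a) y Zv \<noteq> 3" using g3[OF yV Zv_in] by blast
    qed
  qed
qed

lemma sepYZ:
  assumes x: "x = Yv \<or> x = Zv" "x \<notin> M" and y: "isL a y \<or> isS a y" "y \<notin> M"
  shows "\<exists>z\<in>M. dk (gE a) k x z \<noteq> dk (gE a) k y z"
proof -
  have yV: "y \<in> gV a" using y(1) by (auto simp: isL_def isS_def)
  have yY: "\<not> gE a y Yv" "y \<noteq> Yv" "\<not> gE a y Zv" "y \<noteq> Zv" using y(1) by (auto simp: isL_def isS_def)
  show ?thesis
  proof (cases "x = Zv")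
    case True
    then have Y: "Yv \<in> M" using YZ x(2) by auto
    show ?thesis
    proof (rule sepI[OF Y, of 1])
      show "1 \<le> k" using K2 by simp
      show "gdist (gE a) x Yv = 1" using g1[OF _ Yv_in, of x] True by simp
      show "gdist (gE a) y Yv \<noteq> 1" using g1[OF yV Yv_in] yY by simp
    qed
  next
    case False
    then have xY: "x = Yv" using x(1) by simp
    then have Z: "Zv \<in> M" using YZ x(2) by auto
    show ?thesis
    proof (rule sepI[OF Z, of 1])
      show "1 \<le> k" using K2 by simp
      show "gdist (gE a) x Zv = 1" using g1[OF _ Zv_in, of x] xY by simp
      show "gdist (gE a) y Zv \<noteq> 1" using g1[OF yV Zv_in] yY by simp
    qed
  qed
qed

lemma res_main: "resolving_k (gV a) (gE a) k M"
  unfolding resolving_k_def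
proof (intro conjI ballI impI)
  show "M \<subseteq> gV a" by (rule MV)
next
  fix x y assume xV: "x \<in> gV a" and yV: "y \<in> gV a" and xy: "x \<noteq> y"
  show "\<exists>z\<in>M. dk (gE a) k x z \<noteq> dk (gE a) k y z"
  proof (cases "x \<in> M \<or> y \<in> M")
    case True
    then show ?thesis
    proof
      assume "x \<in> M" then show ?thesis using sepM yV xy by blast
    next
      assume "y \<in> M" then show ?thesis using sepM[of y x] xV xy by (blast intro: sep_sym)
    qed
  next
    case nM: False
    show ?thesis
    proof (cases "(\<exists>j. x = Pv j) \<or> (\<exists>j. y = Pv j)")
      case True
      then show ?thesis
      proof
        assume "\<exists>j. x = Pv j"
        then obtain j where j: "x = Pv j" by blast
        then have "1 \<le> j" "j \<le> a" using xV by auto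
        then show ?thesis using sepP[of j y] j yV xy by blast
      next
        assume "\<exists>j. y = Pv j"
        then obtain j where j: "y = Pv j" by blast
        then have "1 \<le> j" "j \<le> a" using yV by auto
        then show ?thesis using sepP[of j x] j xV xy by (blast intro: sep_sym)
      qed
    next
      case nP: False
      show ?thesis
      proof (cases "(\<exists>j. x = Xv j) \<or> (\<exists>j. y = Xv j)")
        case True
        then show ?thesis
        proof
          assume "\<exists>j. x = Xv j"
          then obtain j where j: "x = Xv j" by blast
          then have "1 \<le> j" "j \<le> a" using xV by auto
          then show ?thesis using sepX[of j y] j yV xy nP by blast
        next
          assume "\<exists>j. y = Xv j"
          then obtain j where j: "y = Xv j" by blast
          then have "1 \<le> j" "j \<le> a" using yV by auto
          then show ?thesis using sepX[of j x] j xV xy nP by (blast intro: sep_sym)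
        qed
      next
        case nX: False
        have cx: "isL a x \<or> isS a x \<or> x = Yv \<or> x = Zv" using classify[OF xV] nP nX by blast
        have cy: "isL a y \<or> isS a y \<or> y = Yv \<or> y = Zv" using classify[OF yV] nP nX by blast
        have xM: "x \<notin> M" and yM: "y \<notin> M" using nM by auto
        show ?thesis
        proof (cases "x = Yv \<or> x = Zv")
          case xYZ: True
          show ?thesis
          proof (cases "y = Yv \<or> y = Zv")
            case True
            then have "(x = Yv \<and> y = Zv) \<or> (x = Zv \<and> y = Yv)" using xYZ xy by blast
            then have "Yv \<notin> M \<and> Zv \<notin> M" using xM yM by blast
            then show ?thesis using YZ by blast
          next
            case False
            then have "isL a y \<or> isS a y" using cy by blast
            then show ?thesis using sepYZ xYZ xM yM by blast
          qed
        next
          case xn: False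
          then have cx': "isL a x \<or> isS a x" using cx by blast
          show ?thesis
          proof (cases "y = Yv \<or> y = Zv")
            case True
            then show ?thesis using sepYZ[of y x] cx' xM yM by (blast intro: sep_sym)
          next
            case False
            then have cy': "isL a y \<or> isS a y" using cy by blast
            show ?thesis
            proof (cases "isL a x")
              case xL: True
              show ?thesis
              proof (cases "isL a y")
                case True then show ?thesis using sepLL xL xM yM xy by blast
              next
                case False then have "isS a y" using cy' by blast
                then show ?thesis using sepSL[of y x] xL xM yM by (blast intro: sep_sym)
              qed
            next
              case False
              then have xS: "isS a x" using cx' by blast
              show ?thesis
              proof (cases "isL a y")
                case True then show ?thesis using sepSL xS xM yM by blast
              next
                case False then have "isS a y" using cy' by blast
                then show ?thesis using sepSS xS xM yM xy by blast
              qed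
            qed
          qed
        qed
      qed
    qed
  qed
qed

end


definition PT :: "nat \<Rightarrow> gvert set set" where
  "PT a = (\<lambda>i. {Lv i, Lv' i}) ` {1..a} \<union> (\<lambda>i. {Sv i, Sv' i}) ` {1..a}"
definition P1 :: "nat \<Rightarrow> gvert set set" where
  "P1 a = PT a \<union> (\<lambda>i. {Pv i, Xv i}) ` {1..a}"
definition P2 :: "nat \<Rightarrow> gvert set set" where
  "P2 a = PT a \<union> {{Xv 1, Xv 2}}"
definition P3 :: "nat \<Rightarrow> gvert set set" where
  "P3 a = PT a \<union> {{Yv, Zv}}"

lemma PT_ok: "pairs_ok (gV a) (PT a)"
  unfolding pairs_ok_def PT_def by auto

lemma P1_ok: "pairs_ok (gV a) (P1 a)"
  unfolding pairs_ok_def P1_def PT_def by auto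

lemma P2_ok: "2 \<le> a \<Longrightarrow> pairs_ok (gV a) (P2 a)"
  unfolding pairs_ok_def P2_def PT_def by auto

lemma P3_ok: "pairs_ok (gV a) (P3 a)"
  unfolding pairs_ok_def P3_def PT_def by auto

lemma hitsTW:
  assumes "\<forall>p\<in>PT a. p \<inter> M \<noteq> {}" "1 \<le> i" "i \<le> a"
  shows "(Lv i \<in> M \<or> Lv' i \<in> M) \<and> (Sv i \<in> M \<or> Sv' i \<in> M)"
proof -
  have "{Lv i, Lv' i} \<in> PT a" "{Sv i, Sv' i} \<in> PT a" using assms(2,3) by (auto simp: PT_def)
  then have "{Lv i, Lv' i} \<inter> M \<noteq> {}" "{Sv i, Sv' i} \<inter> M \<noteq> {}" using assms(1) by blast+
  then show ?thesis by blast
qed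

lemma good3: "3 \<le> k \<Longrightarrow> goodM (gV a) (gE a) k (P3 a) {}"
  unfolding goodM_def
proof (intro allI impI)
  fix M' assume k: "3 \<le> k" and h: "{} \<subseteq> M' \<and> M' \<subseteq> gV a \<and> (\<forall>p\<in>P3 a. p \<inter> M' \<noteq> {})"
  have MV: "M' \<subseteq> gV a" using h by blast
  have hp: "\<forall>p\<in>PT a. p \<inter> M' \<noteq> {}" using h by (auto simp: P3_def)
  have "{Yv, Zv} \<inter> M' \<noteq> {}" using h by (auto simp: P3_def)
  then have YZ: "Yv \<in> M' \<or> (Zv \<in> M' \<and> 3 \<le> k)" using k by blast
  show "resolving_k (gV a) (gE a) k M'"
    by (rule res_main[OF MV hitsTW[OF hp] _ YZ]) (use k in auto)
qed

lemma good2: "goodM (gV a) (gE a) 2 (PT a) {Yv}"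
  unfolding goodM_def
proof (intro allI impI)
  fix M' assume h: "{Yv} \<subseteq> M' \<and> M' \<subseteq> gV a \<and> (\<forall>p\<in>PT a. p \<inter> M' \<noteq> {})"
  have MV: "M' \<subseteq> gV a" using h by blast
  have hp: "\<forall>p\<in>PT a. p \<inter> M' \<noteq> {}" using h by blast
  have YZ: "Yv \<in> M' \<or> (Zv \<in> M' \<and> 3 \<le> (2::nat))" using h by blast
  show "resolving_k (gV a) (gE a) 2 M'"
    by (rule res_main[OF MV hitsTW[OF hp] _ YZ]) auto
qed

lemma notres:
  assumes "x \<in> V" "y \<in> V" "x \<noteq> y" "\<forall>z\<in>M. dk E k x z = dk E k y z"
  shows "\<not> resolving_k V E k M"
  using assms unfolding resolving_k_def by blast

lemma dk1g: "x \<in> gV a \<Longrightarrow> z \<in> gV a \<Longrightarrow> dk (gE a) 1 x z = (if x = z then 0 else if gE a x z then 1 else 2)"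
  by (rule dk1[OF conn_walk])

lemma dk2g: "x \<in> gV a \<Longrightarrow> z \<in> gV a \<Longrightarrow>
   dk (gE a) 2 x z = (if x = z then 0 else if gE a x z then 1 else if (\<exists>w. gE a x w \<and> gE a w z) then 2 else 3)"
  by (rule dk2[OF conn_walk])

lemma bad1:
  assumes a2: "2 \<le> a"
  shows "goodB (gV a) (gE a) 1 (P1 a) {}"
  unfolding goodB_def
proof (intro allI impI)
  fix M' assume h: "M' \<subseteq> gV a - {} \<and> (\<forall>p\<in>P1 a. \<not> p \<subseteq> M')"
  have MV: "M' \<subseteq> gV a" using h by blast
  have np: "\<not> p \<subseteq> M'" if "p \<in> P1 a" for p using h that by blast
  have leaf: "\<exists>l. (l = Lv i \<or> l = Lv' i) \<and> l \<notin> M'" if "1 \<le> i" "i \<le> a" for i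
  proof -
    have "{Lv i, Lv' i} \<in> P1 a" using that by (auto simp: P1_def PT_def)
    then show ?thesis using np by blast
  qed
  have sv: "\<exists>s. (s = Sv i \<or> s = Sv' i) \<and> s \<notin> M'" if "1 \<le> i" "i \<le> a" for i
  proof -
    have "{Sv i, Sv' i} \<in> P1 a" using that by (auto simp: P1_def PT_def)
    then show ?thesis using np by blast
  qed
  show "\<not> resolving_k (gV a) (gE a) 1 M'"
  proof (cases "\<exists>i. 1 \<le> i \<and> i \<le> a \<and> Pv i \<in> M'")
    case True
    then obtain i where i: "1 \<le> i" "i \<le> a" "Pv i \<in> M'" by blast
    have "{Pv i, Xv i} \<in> P1 a" using i by (auto simp: P1_def)
    then have X: "Xv i \<notin> M'" using np i(3) by blast
    obtain l where l: "l = Lv i \<or> l = Lv' i" "l \<notin> M'" using leaf[OF i(1,2)] by blast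
    obtain s where s: "s = Sv i \<or> s = Sv' i" "s \<notin> M'" using sv[OF i(1,2)] by blast
    have lV: "l \<in> gV a" and sV: "s \<in> gV a" using l(1) s(1) i by auto
    show ?thesis
    proof (rule notres[OF lV sV])
      show "l \<noteq> s" using l(1) s(1) by auto
      show "\<forall>z\<in>M'. dk (gE a) 1 l z = dk (gE a) 1 s z"
      proof
        fix z assume z: "z \<in> M'"
        then have zV: "z \<in> gV a" using MV by blast
        have "l \<noteq> z" "s \<noteq> z" "z \<noteq> Xv i" using z l(2) s(2) X by auto
        moreover have "gE a l z \<longleftrightarrow> z = Pv i" using l(1) i by auto
        moreover have "gE a s z \<longleftrightarrow> z = Pv i \<or> z = Xv i" using s(1) i by auto
        ultimately show "dk (gE a) 1 l z = dk (gE a) 1 s z"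
          unfolding dk1g[OF lV zV] dk1g[OF sV zV] by simp
      qed
    qed
  next
    case False
    have one: "1 \<le> (1::nat)" "1 \<le> a" and two: "1 \<le> (2::nat)" "2 \<le> a" using a2 by auto
    obtain l1 where l1: "l1 = Lv 1 \<or> l1 = Lv' 1" "l1 \<notin> M'" using leaf[OF one] by blast
    obtain l2 where l2: "l2 = Lv 2 \<or> l2 = Lv' 2" "l2 \<notin> M'" using leaf[OF two] by blast
    have lV: "l1 \<in> gV a" "l2 \<in> gV a" using l1(1) l2(1) a2 by auto
    show ?thesis
    proof (rule notres[OF lV])
      show "l1 \<noteq> l2" using l1(1) l2(1) by auto
      show "\<forall>z\<in>M'. dk (gE a) 1 l1 z = dk (gE a) 1 l2 z"
      proof
        fix z assume z: "z \<in> M'"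
        then have zV: "z \<in> gV a" using MV by blast
        have "Pv 1 \<notin> M'" "Pv 2 \<notin> M'" using False a2 by auto
        then have "l1 \<noteq> z" "l2 \<noteq> z" "\<not> gE a l1 z" "\<not> gE a l2 z" using z l1 l2 by auto
        then show "dk (gE a) 1 l1 z = dk (gE a) 1 l2 z"
          unfolding dk1g[OF lV(1) zV] dk1g[OF lV(2) zV] by simp
      qed
    qed
  qed
qed

lemma bad2:
  assumes a2: "2 \<le> a"
  shows "goodB (gV a) (gE a) 2 (P2 a) {Yv}"
  unfolding goodB_def
proof (intro allI impI)
  fix M' assume h: "M' \<subseteq> gV a - {Yv} \<and> (\<forall>p\<in>P2 a. \<not> p \<subseteq> M')"
  have MV: "M' \<subseteq> gV a" and YM: "Yv \<notin> M'" using h by auto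
  have np: "\<not> p \<subseteq> M'" if "p \<in> P2 a" for p using h that by blast
  have "{Xv 1, Xv 2} \<in> P2 a" by (simp add: P2_def)
  then have "Xv 1 \<notin> M' \<or> Xv 2 \<notin> M'" using np by blast
  then have "\<exists>c. 1 \<le> c \<and> c \<le> a \<and> Xv c \<notin> M'"
  proof
    assume "Xv 1 \<notin> M'" then show ?thesis using a2 by (intro exI[of _ 1]) simp
  next
    assume "Xv 2 \<notin> M'" then show ?thesis using a2 by (intro exI[of _ 2]) simp
  qed
  then obtain c where c: "1 \<le> c" "c \<le> a" "Xv c \<notin> M'" by blast
  have "{Lv c, Lv' c} \<in> P2 a" "{Sv c, Sv' c} \<in> P2 a" using c by (auto simp: P2_def PT_def)
  then obtain l s where l: "l = Lv c \<or> l = Lv' c" "l \<notin> M'" and s: "s = Sv c \<or> s = Sv' c" "s \<notin> M'"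
    using np by blast
  have lV: "l \<in> gV a" and sV: "s \<in> gV a" using l(1) s(1) c by auto
  show "\<not> resolving_k (gV a) (gE a) 2 M'"
  proof (rule notres[OF lV sV])
    show "l \<noteq> s" using l(1) s(1) by auto
    show "\<forall>z\<in>M'. dk (gE a) 2 l z = dk (gE a) 2 s z"
    proof
      fix z assume z: "z \<in> M'"
      then have zV: "z \<in> gV a" using MV by blast
      have ne: "l \<noteq> z" "s \<noteq> z" "z \<noteq> Xv c" "z \<noteq> Yv" using z l(2) s(2) c(3) YM by auto
      have e1: "gE a l z \<longleftrightarrow> gE a s z" using l(1) s(1) c ne by auto
      have e2: "(\<exists>w. gE a l w \<and> gE a w z) \<longleftrightarrow> gE a (Pv c) z" using l(1) c by auto
      have e3: "(\<exists>w. gE a s w \<and> gE a w z) \<longleftrightarrow> gE a (Pv c) z \<or> gE a (Xv c) z" using s(1) c by auto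
      have e4: "gE a (Xv c) z \<longrightarrow> gE a (Pv c) z" using ne c by auto
      show "dk (gE a) 2 l z = dk (gE a) 2 s z"
        unfolding dk2g[OF lV zV] dk2g[OF sV zV] using e1 e2 e3 e4 ne by simp
    qed
  qed
qed

lemma partG:
  assumes a2: "2 \<le> a"
  shows "conn_graph (gV a) (gE a)
      \<and> O_R 1 (gV a) (gE a) = Outcome_B
      \<and> O_R 2 (gV a) (gE a) = Outcome_N
      \<and> (\<forall>k\<ge>3. O_R k (gV a) (gE a) = Outcome_M)"
proof (intro conjI allI impI)
  show "conn_graph (gV a) (gE a)" by (rule g_conn)
  show "O_R 1 (gV a) (gE a) = Outcome_B"
    by (rule outcome_B_from[OF gV_finite P1_ok bad1[OF a2] Yv_in])
  show "O_R 2 (gV a) (gE a) = Outcome_N"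
    by (rule outcome_N_from[OF gV_finite PT_ok good2 Yv_in P2_ok[OF a2] bad2[OF a2] Yv_in])
  fix k :: nat assume "3 \<le> k"
  then show "O_R k (gV a) (gE a) = Outcome_M"
    by (rule outcome_M_from[OF gV_finite P3_ok good3 Yv_in])
qed


definition esP2 :: "(nat \<times> nat) list" where "esP2 = [(0, 1)]"
definition tbP2 :: "nat list list" where "tbP2 = [[0, 1], [1, 0]]"

lemma P2_tab: "\<forall>x\<in>set [0..<2]. \<forall>z\<in>set [0..<2]. (x, z) \<in> (edges (EL esP2)) ^^ (DT tbP2 x z) \<and> gdist (EL esP2) x z = DT tbP2 x z"
proof (rule dist_table)
  show "\<forall>u w. EL esP2 u w \<longrightarrow> u \<in> set [0..<2] \<and> w \<in> set [0..<2]" by (auto simp: EL_def esP2_def)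
  show "\<forall>x\<in>set [0..<2]. DT tbP2 x x = 0" by code_simp
  show "\<forall>x\<in>set [0..<2]. \<forall>y\<in>set [0..<2]. EL esP2 x y \<longrightarrow> (\<forall>z\<in>set [0..<2]. DT tbP2 x z \<le> DT tbP2 y z + 1)" by code_simp
  show "\<forall>x\<in>set [0..<2]. \<forall>z\<in>set [0..<2]. x \<noteq> z \<longrightarrow> (\<exists>y\<in>set [0..<2]. EL esP2 x y \<and> DT tbP2 y z + 1 = DT tbP2 x z)" by code_simp
qed

lemma P2_gd: "\<forall>x\<in>set [0..<2]. \<forall>z\<in>set [0..<2]. gdist (EL esP2) x z = DT tbP2 x z"
  using P2_tab by blast

lemma P2_conn: "conn_graph (set [0..<2]) (EL esP2)"
  by (rule conn_from_table[OF _ _ _ _ _ P2_tab]) (auto simp: EL_def esP2_def)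

lemma P2_Dle: "\<forall>x\<in>set [0..<2]. \<forall>z\<in>set [0..<2]. DT tbP2 x z \<le> 0 + 1"
  by code_simp

definition esK3 :: "(nat \<times> nat) list" where "esK3 = [(0, 1), (0, 2), (1, 2)]"
definition tbK3 :: "nat list list" where "tbK3 = [[0, 1, 1], [1, 0, 1], [1, 1, 0]]"

lemma K3_tab: "\<forall>x\<in>set [0..<3]. \<forall>z\<in>set [0..<3]. (x, z) \<in> (edges (EL esK3)) ^^ (DT tbK3 x z) \<and> gdist (EL esK3) x z = DT tbK3 x z"
proof (rule dist_table)
  show "\<forall>u w. EL esK3 u w \<longrightarrow> u \<in> set [0..<3] \<and> w \<in> set [0..<3]" by (auto simp: EL_def esK3_def)
  show "\<forall>x\<in>set [0..<3]. DT tbK3 x x = 0" by code_simp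
  show "\<forall>x\<in>set [0..<3]. \<forall>y\<in>set [0..<3]. EL esK3 x y \<longrightarrow> (\<forall>z\<in>set [0..<3]. DT tbK3 x z \<le> DT tbK3 y z + 1)" by code_simp
  show "\<forall>x\<in>set [0..<3]. \<forall>z\<in>set [0..<3]. x \<noteq> z \<longrightarrow> (\<exists>y\<in>set [0..<3]. EL esK3 x y \<and> DT tbK3 y z + 1 = DT tbK3 x z)" by code_simp
qed

lemma K3_gd: "\<forall>x\<in>set [0..<3]. \<forall>z\<in>set [0..<3]. gdist (EL esK3) x z = DT tbK3 x z"
  using K3_tab by blast

lemma K3_conn: "conn_graph (set [0..<3]) (EL esK3)"
  by (rule conn_from_table[OF _ _ _ _ _ K3_tab]) (auto simp: EL_def esK3_def)

lemma K3_Dle: "\<forall>x\<in>set [0..<3]. \<forall>z\<in>set [0..<3]. DT tbK3 x z \<le> 0 + 1"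
  by code_simp

definition esK4 :: "(nat \<times> nat) list" where "esK4 = [(0, 1), (0, 2), (0, 3), (1, 2), (1, 3), (2, 3)]"
definition tbK4 :: "nat list list" where "tbK4 = [[0, 1, 1, 1], [1, 0, 1, 1], [1, 1, 0, 1], [1, 1, 1, 0]]"

lemma K4_tab: "\<forall>x\<in>set [0..<4]. \<forall>z\<in>set [0..<4]. (x, z) \<in> (edges (EL esK4)) ^^ (DT tbK4 x z) \<and> gdist (EL esK4) x z = DT tbK4 x z"
proof (rule dist_table)
  show "\<forall>u w. EL esK4 u w \<longrightarrow> u \<in> set [0..<4] \<and> w \<in> set [0..<4]" by (auto simp: EL_def esK4_def)
  show "\<forall>x\<in>set [0..<4]. DT tbK4 x x = 0" by code_simp
  show "\<forall>x\<in>set [0..<4]. \<forall>y\<in>set [0..<4]. EL esK4 x y \<longrightarrow> (\<forall>z\<in>set [0..<4]. DT tbK4 x z \<le> DT tbK4 y z + 1)" by code_simp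
  show "\<forall>x\<in>set [0..<4]. \<forall>z\<in>set [0..<4]. x \<noteq> z \<longrightarrow> (\<exists>y\<in>set [0..<4]. EL esK4 x y \<and> DT tbK4 y z + 1 = DT tbK4 x z)" by code_simp
qed

lemma K4_gd: "\<forall>x\<in>set [0..<4]. \<forall>z\<in>set [0..<4]. gdist (EL esK4) x z = DT tbK4 x z"
  using K4_tab by blast

lemma K4_conn: "conn_graph (set [0..<4]) (EL esK4)"
  by (rule conn_from_table[OF _ _ _ _ _ K4_tab]) (auto simp: EL_def esK4_def)

lemma K4_Dle: "\<forall>x\<in>set [0..<4]. \<forall>z\<in>set [0..<4]. DT tbK4 x z \<le> 0 + 1"
  by code_simp

definition esP5 :: "(nat \<times> nat) list" where "esP5 = [(0, 1), (1, 2), (2, 3), (3, 4)]"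
definition tbP5 :: "nat list list" where "tbP5 = [[0, 1, 2, 3, 4], [1, 0, 1, 2, 3], [2, 1, 0, 1, 2], [3, 2, 1, 0, 1], [4, 3, 2, 1, 0]]"

lemma P5_tab: "\<forall>x\<in>set [0..<5]. \<forall>z\<in>set [0..<5]. (x, z) \<in> (edges (EL esP5)) ^^ (DT tbP5 x z) \<and> gdist (EL esP5) x z = DT tbP5 x z"
proof (rule dist_table)
  show "\<forall>u w. EL esP5 u w \<longrightarrow> u \<in> set [0..<5] \<and> w \<in> set [0..<5]" by (auto simp: EL_def esP5_def)
  show "\<forall>x\<in>set [0..<5]. DT tbP5 x x = 0" by code_simp
  show "\<forall>x\<in>set [0..<5]. \<forall>y\<in>set [0..<5]. EL esP5 x y \<longrightarrow> (\<forall>z\<in>set [0..<5]. DT tbP5 x z \<le> DT tbP5 y z + 1)" by code_simp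
  show "\<forall>x\<in>set [0..<5]. \<forall>z\<in>set [0..<5]. x \<noteq> z \<longrightarrow> (\<exists>y\<in>set [0..<5]. EL esP5 x y \<and> DT tbP5 y z + 1 = DT tbP5 x z)" by code_simp
qed

lemma P5_gd: "\<forall>x\<in>set [0..<5]. \<forall>z\<in>set [0..<5]. gdist (EL esP5) x z = DT tbP5 x z"
  using P5_tab by blast

lemma P5_conn: "conn_graph (set [0..<5]) (EL esP5)"
  by (rule conn_from_table[OF _ _ _ _ _ P5_tab]) (auto simp: EL_def esP5_def)

lemma P5_Dle: "\<forall>x\<in>set [0..<5]. \<forall>z\<in>set [0..<5]. DT tbP5 x z \<le> 3 + 1"
  by code_simp

definition esT8 :: "(nat \<times> nat) list" where "esT8 = [(0, 1), (0, 2), (0, 3), (0, 4), (1, 5), (5, 6), (5, 7)]"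
definition tbT8 :: "nat list list" where "tbT8 = [[0, 1, 1, 1, 1, 2, 3, 3], [1, 0, 2, 2, 2, 1, 2, 2], [1, 2, 0, 2, 2, 3, 4, 4], [1, 2, 2, 0, 2, 3, 4, 4], [1, 2, 2, 2, 0, 3, 4, 4], [2, 1, 3, 3, 3, 0, 1, 1], [3, 2, 4, 4, 4, 1, 0, 2], [3, 2, 4, 4, 4, 1, 2, 0]]"

lemma T8_tab: "\<forall>x\<in>set [0..<8]. \<forall>z\<in>set [0..<8]. (x, z) \<in> (edges (EL esT8)) ^^ (DT tbT8 x z) \<and> gdist (EL esT8) x z = DT tbT8 x z"
proof (rule dist_table)
  show "\<forall>u w. EL esT8 u w \<longrightarrow> u \<in> set [0..<8] \<and> w \<in> set [0..<8]" by (auto simp: EL_def esT8_def)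
  show "\<forall>x\<in>set [0..<8]. DT tbT8 x x = 0" by code_simp
  show "\<forall>x\<in>set [0..<8]. \<forall>y\<in>set [0..<8]. EL esT8 x y \<longrightarrow> (\<forall>z\<in>set [0..<8]. DT tbT8 x z \<le> DT tbT8 y z + 1)" by code_simp
  show "\<forall>x\<in>set [0..<8]. \<forall>z\<in>set [0..<8]. x \<noteq> z \<longrightarrow> (\<exists>y\<in>set [0..<8]. EL esT8 x y \<and> DT tbT8 y z + 1 = DT tbT8 x z)" by code_simp
qed

lemma T8_gd: "\<forall>x\<in>set [0..<8]. \<forall>z\<in>set [0..<8]. gdist (EL esT8) x z = DT tbT8 x z"
  using T8_tab by blast

lemma T8_conn: "conn_graph (set [0..<8]) (EL esT8)"
  by (rule conn_from_table[OF _ _ _ _ _ T8_tab]) (auto simp: EL_def esT8_def)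

lemma T8_Dle: "\<forall>x\<in>set [0..<8]. \<forall>z\<in>set [0..<8]. DT tbT8 x z \<le> 3 + 1"
  by code_simp

definition esT10 :: "(nat \<times> nat) list" where "esT10 = [(0, 1), (0, 2), (0, 3), (0, 4), (1, 5), (1, 6), (2, 7), (7, 8), (7, 9)]"
definition tbT10 :: "nat list list" where "tbT10 = [[0, 1, 1, 1, 1, 2, 2, 2, 3, 3], [1, 0, 2, 2, 2, 1, 1, 3, 4, 4], [1, 2, 0, 2, 2, 3, 3, 1, 2, 2], [1, 2, 2, 0, 2, 3, 3, 3, 4, 4], [1, 2, 2, 2, 0, 3, 3, 3, 4, 4], [2, 1, 3, 3, 3, 0, 2, 4, 5, 5], [2, 1, 3, 3, 3, 2, 0, 4, 5, 5], [2, 3, 1, 3, 3, 4, 4, 0, 1, 1], [3, 4, 2, 4, 4, 5, 5, 1, 0, 2], [3, 4, 2, 4, 4, 5, 5, 1, 2, 0]]"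

lemma T10_tab: "\<forall>x\<in>set [0..<10]. \<forall>z\<in>set [0..<10]. (x, z) \<in> (edges (EL esT10)) ^^ (DT tbT10 x z) \<and> gdist (EL esT10) x z = DT tbT10 x z"
proof (rule dist_table)
  show "\<forall>u w. EL esT10 u w \<longrightarrow> u \<in> set [0..<10] \<and> w \<in> set [0..<10]" by (auto simp: EL_def esT10_def)
  show "\<forall>x\<in>set [0..<10]. DT tbT10 x x = 0" by code_simp
  show "\<forall>x\<in>set [0..<10]. \<forall>y\<in>set [0..<10]. EL esT10 x y \<longrightarrow> (\<forall>z\<in>set [0..<10]. DT tbT10 x z \<le> DT tbT10 y z + 1)" by code_simp
  show "\<forall>x\<in>set [0..<10]. \<forall>z\<in>set [0..<10]. x \<noteq> z \<longrightarrow> (\<exists>y\<in>set [0..<10]. EL esT10 x y \<and> DT tbT10 y z + 1 = DT tbT10 x z)" by code_simp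
qed

lemma T10_gd: "\<forall>x\<in>set [0..<10]. \<forall>z\<in>set [0..<10]. gdist (EL esT10) x z = DT tbT10 x z"
  using T10_tab by blast

lemma T10_conn: "conn_graph (set [0..<10]) (EL esT10)"
  by (rule conn_from_table[OF _ _ _ _ _ T10_tab]) (auto simp: EL_def esT10_def)

lemma T10_Dle: "\<forall>x\<in>set [0..<10]. \<forall>z\<in>set [0..<10]. DT tbT10 x z \<le> 4 + 1"
  by code_simp

definition esG14 :: "(nat \<times> nat) list" where "esG14 = [(0, 1), (0, 2), (0, 3), (0, 4), (3, 5), (4, 5), (5, 12), (6, 7), (6, 8), (6, 9), (6, 10), (9, 11), (10, 11), (11, 12), (0, 6), (12, 13)]"
definition tbG14 :: "nat list list" where "tbG14 = [[0, 1, 1, 1, 1, 2, 1, 2, 2, 2, 2, 3, 3, 4], [1, 0, 2, 2, 2, 3, 2, 3, 3, 3, 3, 4, 4, 5], [1, 2, 0, 2, 2, 3, 2, 3, 3, 3, 3, 4, 4, 5], [1, 2, 2, 0, 2, 1, 2, 3, 3, 3, 3, 3, 2, 3], [1, 2, 2, 2, 0, 1, 2, 3, 3, 3, 3, 3, 2, 3], [2, 3, 3, 1, 1, 0, 3, 4, 4, 3, 3, 2, 1, 2], [1, 2, 2, 2, 2, 3, 0, 1, 1, 1, 1, 2, 3, 4], [2, 3, 3, 3, 3, 4, 1, 0, 2, 2, 2, 3, 4, 5], [2, 3, 3, 3, 3, 4, 1, 2, 0, 2, 2, 3, 4, 5], [2, 3, 3, 3, 3, 3, 1, 2, 2, 0,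 2, 1, 2, 3], [2, 3, 3, 3, 3, 3, 1, 2, 2, 2, 0, 1, 2, 3], [3, 4, 4, 3, 3, 2, 2, 3, 3, 1, 1, 0, 1, 2], [3, 4, 4, 2, 2, 1, 3, 4, 4, 2, 2, 1, 0, 1], [4, 5, 5, 3, 3, 2, 4, 5, 5, 3, 3, 2, 1, 0]]"

lemma G14_tab: "\<forall>x\<in>set [0..<14]. \<forall>z\<in>set [0..<14]. (x, z) \<in> (edges (EL esG14)) ^^ (DT tbG14 x z) \<and> gdist (EL esG14) x z = DT tbG14 x z"
proof (rule dist_table)
  show "\<forall>u w. EL esG14 u w \<longrightarrow> u \<in> set [0..<14] \<and> w \<in> set [0..<14]" by (auto simp: EL_def esG14_def)
  show "\<forall>x\<in>set [0..<14]. DT tbG14 x x = 0" by code_simp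
  show "\<forall>x\<in>set [0..<14]. \<forall>y\<in>set [0..<14]. EL esG14 x y \<longrightarrow> (\<forall>z\<in>set [0..<14]. DT tbG14 x z \<le> DT tbG14 y z + 1)" by code_simp
  show "\<forall>x\<in>set [0..<14]. \<forall>z\<in>set [0..<14]. x \<noteq> z \<longrightarrow> (\<exists>y\<in>set [0..<14]. EL esG14 x y \<and> DT tbG14 y z + 1 = DT tbG14 x z)" by code_simp
qed

lemma G14_gd: "\<forall>x\<in>set [0..<14]. \<forall>z\<in>set [0..<14]. gdist (EL esG14) x z = DT tbG14 x z"
  using G14_tab by blast

lemma G14_conn: "conn_graph (set [0..<14]) (EL esG14)"
  by (rule conn_from_table[OF _ _ _ _ _ G14_tab]) (auto simp: EL_def esG14_def)

lemma G14_Dle: "\<forall>x\<in>set [0..<14]. \<forall>z\<in>set [0..<14]. DT tbG14 x z \<le> 4 + 1"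
  by code_simp

lemma P2_p: "pairs_ok (set [0..<2]) (pset [(0, 1)])"
  by (simp add: pairs_ok_def pset_def)

lemma P2_m: "goodM (set [0..<2]) (EL esP2) 1 (pset [(0, 1)]) {}"
  by (rule goodM_checkD[OF P2_gd]) code_simp

lemma partA: "\<exists>(V :: nat set) E. conn_graph V E \<and> (\<forall>k\<ge>1. O_R k V E = Outcome_M)"
proof (intro exI conjI allI impI)
  show "conn_graph (set [0..<2]) (EL esP2)" by (rule P2_conn)
  fix k :: nat assume "1 \<le> k"
  then show "O_R k (set [0..<2]) (EL esP2) = Outcome_M"
    by (intro outcome_M_from[OF _ P2_p goodM_mono_k[OF P2_m], of _ 0]) auto
qed

lemma K3_p: "pairs_ok (set [0..<3]) (pset [(1, 2)])"
  by (simp add: pairs_ok_def pset_def)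

lemma K3_m: "goodM (set [0..<3]) (EL esK3) 1 (pset [(1, 2)]) {0}"
  by (rule goodM_checkD[OF K3_gd]) code_simp

lemma K3_b: "goodB (set [0..<3]) (EL esK3) 0 (pset [(1, 2)]) {0}"
  by (rule goodB_checkD[OF K3_gd]) code_simp

lemma partB: "\<exists>(V :: nat set) E. conn_graph V E \<and> (\<forall>k\<ge>1. O_R k V E = Outcome_N)"
proof (intro exI conjI allI impI)
  show "conn_graph (set [0..<3]) (EL esK3)" by (rule K3_conn)
  fix k :: nat assume "1 \<le> k"
  then show "O_R k (set [0..<3]) (EL esK3) = Outcome_N"
    by (intro outcome_N_from[OF _ K3_p goodM_mono_k[OF K3_m] _ K3_p goodB_all_k[OF K3_gd K3_Dle K3_b]]) auto
qed

lemma K4_p: "pairs_ok (set [0..<4]) (pset [(0, 1), (2, 3)])"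
  by (simp add: pairs_ok_def pset_def)

lemma K4_b: "goodB (set [0..<4]) (EL esK4) 0 (pset [(0, 1), (2, 3)]) {}"
  by (rule goodB_checkD[OF K4_gd]) code_simp

lemma partC: "\<exists>(V :: nat set) E. conn_graph V E \<and> (\<forall>k\<ge>1. O_R k V E = Outcome_B)"
proof (intro exI conjI allI impI)
  show "conn_graph (set [0..<4]) (EL esK4)" by (rule K4_conn)
  fix k :: nat assume "1 \<le> k"
  then show "O_R k (set [0..<4]) (EL esK4) = Outcome_B"
    by (intro outcome_B_from[OF _ K4_p goodB_all_k[OF K4_gd K4_Dle K4_b], where b=0]) auto
qed

lemma P5_p1: "pairs_ok (set [0..<5]) (pset [(2, 4)])"
  by (simp add: pairs_ok_def pset_def)

lemma P5_m1: "goodM (set [0..<5]) (EL esP5) 1 (pset [(2, 4)]) {0}"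
  by (rule goodM_checkD[OF P5_gd]) code_simp

lemma P5_p2: "pairs_ok (set [0..<5]) (pset [(0, 4), (1, 3)])"
  by (simp add: pairs_ok_def pset_def)

lemma P5_b1: "goodB (set [0..<5]) (EL esP5) 1 (pset [(0, 4), (1, 3)]) {2}"
  by (rule goodB_checkD[OF P5_gd]) code_simp

lemma P5_p3: "pairs_ok (set [0..<5]) (pset [(1, 2), (3, 4)])"
  by (simp add: pairs_ok_def pset_def)

lemma P5_m2: "goodM (set [0..<5]) (EL esP5) 2 (pset [(1, 2), (3, 4)]) {}"
  by (rule goodM_checkD[OF P5_gd]) code_simp

lemma partD: "\<exists>(V :: nat set) E. conn_graph V E \<and> O_R 1 V E = Outcome_N \<and> (\<forall>k\<ge>2. O_R k V E = Outcome_M)"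
proof (intro exI conjI allI impI)
  show "conn_graph (set [0..<5]) (EL esP5)" by (rule P5_conn)
  show "O_R 1 (set [0..<5]) (EL esP5) = Outcome_N"
    by (intro outcome_N_from[OF _ P5_p1 P5_m1 _ P5_p2 P5_b1]) auto
  fix k :: nat assume "2 \<le> k"
  then show "O_R k (set [0..<5]) (EL esP5) = Outcome_M"
    by (intro outcome_M_from[OF _ P5_p3 goodM_mono_k[OF P5_m2], of _ 0]) auto
qed

lemma T8_p1: "pairs_ok (set [0..<8]) (pset [(0, 1), (2, 3), (4, 5), (6, 7)])"
  by (simp add: pairs_ok_def pset_def)

lemma T8_b1: "goodB (set [0..<8]) (EL esT8) 1 (pset [(0, 1), (2, 3), (4, 5), (6, 7)]) {}"
  by (rule goodB_checkD[OF T8_gd]) code_simp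

lemma T8_p2: "pairs_ok (set [0..<8]) (pset [(3, 4), (6, 7)])"
  by (simp add: pairs_ok_def pset_def)

lemma T8_m2: "goodM (set [0..<8]) (EL esT8) 2 (pset [(3, 4), (6, 7)]) {2}"
  by (rule goodM_checkD[OF T8_gd]) code_simp

lemma T8_p3: "pairs_ok (set [0..<8]) (pset [(3, 4)])"
  by (simp add: pairs_ok_def pset_def)

lemma T8_b3: "goodB (set [0..<8]) (EL esT8) 3 (pset [(3, 4)]) {2}"
  by (rule goodB_checkD[OF T8_gd]) code_simp

lemma partE: "\<exists>(V :: nat set) E. conn_graph V E \<and> O_R 1 V E = Outcome_B \<and> (\<forall>k\<ge>2. O_R k V E = Outcome_N)"
proof (intro exI conjI allI impI)
  show "conn_graph (set [0..<8]) (EL esT8)" by (rule T8_conn)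
  show "O_R 1 (set [0..<8]) (EL esT8) = Outcome_B"
    by (intro outcome_B_from[OF _ T8_p1 T8_b1, where b=0]) auto
  fix k :: nat assume "2 \<le> k"
  then show "O_R k (set [0..<8]) (EL esT8) = Outcome_N"
    by (intro outcome_N_from[OF _ T8_p2 goodM_mono_k[OF T8_m2] _ T8_p3 goodB_all_k[OF T8_gd _ T8_b3]])
       (use T8_Dle in auto)
qed

lemma T10_p1: "pairs_ok (set [0..<10]) (pset [(0, 3), (1, 2), (4, 5), (6, 7), (8, 9)])"
  by (simp add: pairs_ok_def pset_def)

lemma T10_b1: "goodB (set [0..<10]) (EL esT10) 1 (pset [(0, 3), (1, 2), (4, 5), (6, 7), (8, 9)]) {}"
  by (rule goodB_checkD[OF T10_gd]) code_simp

lemma T10_p2: "pairs_ok (set [0..<10]) (pset [(3, 4), (5, 6), (8, 9)])"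
  by (simp add: pairs_ok_def pset_def)

lemma T10_m2: "goodM (set [0..<10]) (EL esT10) 2 (pset [(3, 4), (5, 6), (8, 9)]) {}"
  by (rule goodM_checkD[OF T10_gd]) code_simp

lemma partF: "\<exists>(V :: nat set) E. conn_graph V E \<and> O_R 1 V E = Outcome_B \<and> (\<forall>k\<ge>2. O_R k V E = Outcome_M)"
proof (intro exI conjI allI impI)
  show "conn_graph (set [0..<10]) (EL esT10)" by (rule T10_conn)
  show "O_R 1 (set [0..<10]) (EL esT10) = Outcome_B"
    by (intro outcome_B_from[OF _ T10_p1 T10_b1, where b=0]) auto
  fix k :: nat assume "2 \<le> k"
  then show "O_R k (set [0..<10]) (EL esT10) = Outcome_M"
    by (intro outcome_M_from[OF _ T10_p2 goodM_mono_k[OF T10_m2], of _ 0]) auto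
qed

lemma G14_p1: "pairs_ok (set [0..<14]) (pset [(1, 2), (7, 8), (3, 4), (9, 10), (0, 5), (6, 11)])"
  by (simp add: pairs_ok_def pset_def)

lemma G14_b1: "goodB (set [0..<14]) (EL esG14) 1 (pset [(1, 2), (7, 8), (3, 4), (9, 10), (0, 5), (6, 11)]) {}"
  by (rule goodB_checkD[OF G14_gd]) code_simp

lemma G14_p2: "pairs_ok (set [0..<14]) (pset [(1, 2), (7, 8), (3, 4), (9, 10)])"
  by (simp add: pairs_ok_def pset_def)

lemma G14_m2: "goodM (set [0..<14]) (EL esG14) 2 (pset [(1, 2), (7, 8), (3, 4), (9, 10)]) {12}"
  by (rule goodM_checkD[OF G14_gd]) code_simp

lemma G14_p3: "pairs_ok (set [0..<14]) (pset [(1, 2), (7, 8), (3, 4), (9, 10), (5, 11)])"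
  by (simp add: pairs_ok_def pset_def)

lemma G14_b2: "goodB (set [0..<14]) (EL esG14) 2 (pset [(1, 2), (7, 8), (3, 4), (9, 10), (5, 11)]) {12}"
  by (rule goodB_checkD[OF G14_gd]) code_simp

lemma G14_p4: "pairs_ok (set [0..<14]) (pset [(1, 2), (7, 8), (3, 4), (9, 10), (12, 13)])"
  by (simp add: pairs_ok_def pset_def)

lemma G14_m3: "goodM (set [0..<14]) (EL esG14) 3 (pset [(1, 2), (7, 8), (3, 4), (9, 10), (12, 13)]) {}"
  by (rule goodM_checkD[OF G14_gd]) code_simp

lemma partH: "\<exists>(V :: nat set) E. conn_graph V E \<and> O_R 1 V E = Outcome_B
        \<and> O_R 2 V E = Outcome_N \<and> (\<forall>k\<ge>3. O_R k V E = Outcome_M)"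
proof (intro exI conjI allI impI)
  show "conn_graph (set [0..<14]) (EL esG14)" by (rule G14_conn)
  show "O_R 1 (set [0..<14]) (EL esG14) = Outcome_B"
    by (intro outcome_B_from[OF _ G14_p1 G14_b1, where b=0]) auto
  show "O_R 2 (set [0..<14]) (EL esG14) = Outcome_N"
    by (intro outcome_N_from[OF _ G14_p2 G14_m2 _ G14_p3 G14_b2]) auto
  fix k :: nat assume "3 \<le> k"
  then show "O_R k (set [0..<14]) (EL esG14) = Outcome_M"
    by (intro outcome_M_from[OF _ G14_p4 goodM_mono_k[OF G14_m3], of _ 0]) auto
qed


theorem theorem2p13:
  shows
   "(\<exists>(V :: nat set) E. conn_graph V E \<and> (\<forall>k\<ge>1. O_R k V E = Outcome_M))
  \<and> (\<exists>(V :: nat set) E. conn_graph V E \<and> (\<forall>k\<ge>1. O_R k V E = Outcome_N))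
  \<and> (\<exists>(V :: nat set) E. conn_graph V E \<and> (\<forall>k\<ge>1. O_R k V E = Outcome_B))
  \<and> (\<exists>(V :: nat set) E. conn_graph V E \<and> O_R 1 V E = Outcome_N
        \<and> (\<forall>k\<ge>2. O_R k V E = Outcome_M))
  \<and> (\<exists>(V :: nat set) E. conn_graph V E \<and> O_R 1 V E = Outcome_B
        \<and> (\<forall>k\<ge>2. O_R k V E = Outcome_N))
  \<and> (\<exists>(V :: nat set) E. conn_graph V E \<and> O_R 1 V E = Outcome_B
        \<and> (\<forall>k\<ge>2. O_R k V E = Outcome_M))
  \<and> (\<forall>\<alpha>::nat. \<alpha> \<ge> 2 \<longrightarrow>
        conn_graph (gV \<alpha>) (gE \<alpha>)
      \<and> O_R 1 (gV \<alpha>) (gE \<alpha>) = Outcome_B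
      \<and> O_R 2 (gV \<alpha>) (gE \<alpha>) = Outcome_N
      \<and> (\<forall>k\<ge>3. O_R k (gV \<alpha>) (gE \<alpha>) = Outcome_M))
  \<and> (\<exists>(V :: nat set) E. conn_graph V E \<and> O_R 1 V E = Outcome_B
        \<and> O_R 2 V E = Outcome_N \<and> (\<forall>k\<ge>3. O_R k V E = Outcome_M))"
proof -
  have G: "\<forall>\<alpha>::nat. \<alpha> \<ge> 2 \<longrightarrow>
        conn_graph (gV \<alpha>) (gE \<alpha>)
      \<and> O_R 1 (gV \<alpha>) (gE \<alpha>) = Outcome_B
      \<and> O_R 2 (gV \<alpha>) (gE \<alpha>) = Outcome_N
      \<and> (\<forall>k\<ge>3. O_R k (gV \<alpha>) (gE \<alpha>) = Outcome_M)"
    using partG by blast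
  show ?thesis
    using partA partB partC partD partE partF G partH by (intro conjI) assumption+
qed

end
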